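(* There is no connected tricyclic graph $G$ with exactly two main eigenvalues such that the graph $G_0$ obtained from $G$ by deleting all pendant vertices belongs to $\mathcal{T}_5$.
   Context: All graphs are finite, undirected and simple. A connected graph $G$ is tricyclic if $|E(G)|=|V(G)|+2$. An eigenvalue of $G$ (of its adjacency matrix) is a main eigenvalue if it has an eigenvector whose entries do not sum to zero. A pendant vertex is a vertex of degree one. $\mathcal{T}_5$ is the class of simple graphs obtained as follows: take three distinct vertices $A,B,C$ and five pairwise internally vertex-disjoint paths, each with at least one edge, avoiding $A,B,C$ in their interiors: one path joining $A$ and $C$, two paths joining $A$ and $B$, and two paths joining $B$ and $C$ (so that $A$ and $C$ have degree $3$, $B$ has degree $4$, and all other vertices have degree $2$). *)

theory Defs
  imports Complex_Main
begin

definition simple_graph :: "'a set \<Rightarrow> 'a set set \<Rightarrow> bool" where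
  "simple_graph V E \<longleftrightarrow> finite V \<and>
     (\<forall>e\<in>E. \<exists>u v. e = {u, v} \<and> u \<noteq> v \<and> u \<in> V \<and> v \<in> V)"

definition adj :: "'a set set \<Rightarrow> 'a \<Rightarrow> 'a \<Rightarrow> bool" where
  "adj E u v \<longleftrightarrow> {u, v} \<in> E"

definition connected_graph :: "'a set \<Rightarrow> 'a set set \<Rightarrow> bool" where
  "connected_graph V E \<longleftrightarrow> V \<noteq> {} \<and>
     (\<forall>u\<in>V. \<forall>v\<in>V. (u, v) \<in> {(x, y). adj E x y}\<^sup>*)"

definition degree :: "'a set set \<Rightarrow> 'a \<Rightarrow> nat" where
  "degree E v = card {e \<in> E. v \<in> e}"

text \<open>Action of the adjacency matrix on a vector indexed by V.\<close>
definition adj_mult :: "'a set \<Rightarrow> 'a set set \<Rightarrow> ('a \<Rightarrow> real) \<Rightarrow> 'a \<Rightarrow> real" where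
  "adj_mult V E x v = (\<Sum>u\<in>{u \<in> V. adj E u v}. x u)"

definition is_eigenvector :: "'a set \<Rightarrow> 'a set set \<Rightarrow> real \<Rightarrow> ('a \<Rightarrow> real) \<Rightarrow> bool" where
  "is_eigenvector V E \<mu> x \<longleftrightarrow> (\<exists>v\<in>V. x v \<noteq> 0) \<and> (\<forall>v\<in>V. adj_mult V E x v = \<mu> * x v)"

definition main_eigenvalue :: "'a set \<Rightarrow> 'a set set \<Rightarrow> real \<Rightarrow> bool" where
  "main_eigenvalue V E \<mu> \<longleftrightarrow> (\<exists>x. is_eigenvector V E \<mu> x \<and> (\<Sum>v\<in>V. x v) \<noteq> 0)"

definition pendant_vertices :: "'a set \<Rightarrow> 'a set set \<Rightarrow> 'a set" where
  "pendant_vertices V E = {v \<in> V. degree E v = 1}"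

definition del_pendant_V :: "'a set \<Rightarrow> 'a set set \<Rightarrow> 'a set" where
  "del_pendant_V V E = V - pendant_vertices V E"

definition del_pendant_E :: "'a set \<Rightarrow> 'a set set \<Rightarrow> 'a set set" where
  "del_pendant_E V E = {e \<in> E. e \<subseteq> del_pendant_V V E}"

definition path_edges :: "'a list \<Rightarrow> 'a set set" where
  "path_edges p = {{p ! i, p ! Suc i} | i. Suc i < length p}"

definition interior :: "'a list \<Rightarrow> 'a set" where
  "interior p = set (butlast (tl p))"

definition is_path_between :: "'a list \<Rightarrow> 'a \<Rightarrow> 'a \<Rightarrow> bool" where
  "is_path_between p a b \<longleftrightarrow> distinct p \<and> length p \<ge> 2 \<and> hd p = a \<and> last p = b"

text \<open>Edge-disjointness of the paths (needed for a
  simple graph with deg A = deg C = 3, deg B = 4) is required explicitly.\<close>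
definition in_T5 :: "'a set \<Rightarrow> 'a set set \<Rightarrow> bool" where
  "in_T5 V E \<longleftrightarrow>
    (\<exists>A B C p1 p2 p3 p4 p5.
       distinct [A, B, C] \<and>
       is_path_between p1 A C \<and>
       is_path_between p2 A B \<and> is_path_between p3 A B \<and>
       is_path_between p4 B C \<and> is_path_between p5 B C \<and>
       (let ps = [p1, p2, p3, p4, p5] in
          (\<forall>i<5. interior (ps ! i) \<inter> {A, B, C} = {}) \<and>
          (\<forall>i<5. \<forall>j<5. i \<noteq> j \<longrightarrow> interior (ps ! i) \<inter> set (ps ! j) = {}) \<and>
          (\<forall>i<5. \<forall>j<5. i \<noteq> j \<longrightarrow> path_edges (ps ! i) \<inter> path_edges (ps ! j) = {}) \<and>
          V = (\<Union>i<5. set (ps ! i)) \<and>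
          E = (\<Union>i<5. path_edges (ps ! i))))"

end

theory Submission
  imports Defs "HOL-Computational_Algebra.Fundamental_Theorem_Algebra"
begin

lemma dep:
  fixes f :: "'i \<Rightarrow> 'a \<Rightarrow> real"
  assumes "finite W" "finite I" "card W < card I"
  shows "\<exists>c. (\<exists>i\<in>I. c i \<noteq> 0) \<and> (\<forall>v\<in>W. (\<Sum>i\<in>I. c i * f i v) = 0)"
  using assms
proof (induction W arbitrary: I f rule: finite_induct)
  case empty
  then obtain i0 where "i0 \<in> I" by fastforce
  then show ?case by (rule_tac x="\<lambda>_. 1" in exI) auto
next
  case (insert w W)
  show ?case
  proof (cases "\<forall>i\<in>I. f i w = 0")
    case True
    have "card W < card I" using insert by simp
    then obtain c where c: "\<exists>i\<in>I. c i \<noteq> 0" "\<forall>v\<in>W. (\<Sum>i\<in>I. c i * f i v) = 0"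
      using insert.IH[OF insert.prems(1)] by blast
    then show ?thesis using True by (rule_tac x=c in exI) auto
  next
    case False
    then obtain i0 where i0: "i0 \<in> I" "f i0 w \<noteq> 0" by auto
    define I' where "I' = I - {i0}"
    define g where "g i v = f i v - (f i w / f i0 w) * f i0 v" for i v
    have fI': "finite I'" using insert.prems(1) unfolding I'_def by simp
    have cI': "card W < card I'" using insert i0 unfolding I'_def by (simp add: card_Diff_singleton)
    obtain c' where c': "\<exists>i\<in>I'. c' i \<noteq> 0" "\<forall>v\<in>W. (\<Sum>i\<in>I'. c' i * g i v) = 0"
      using insert.IH[OF fI' cI', of g] by blast
    define c where "c = c'(i0 := - (\<Sum>i\<in>I'. c' i * f i w) / f i0 w)"
    have key: "(\<Sum>i\<in>I. c i * f i v) = (\<Sum>i\<in>I'. c' i * g i v)" for v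
    proof -
      have "(\<Sum>i\<in>I. c i * f i v) = c i0 * f i0 v + (\<Sum>i\<in>I'. c i * f i v)"
        unfolding I'_def using insert.prems(1) i0(1) by (simp add: sum.remove)
      also have "(\<Sum>i\<in>I'. c i * f i v) = (\<Sum>i\<in>I'. c' i * f i v)"
        unfolding c_def I'_def by (auto intro!: sum.cong)
      also have "(\<Sum>i\<in>I'. c' i * g i v) = (\<Sum>i\<in>I'. c' i * f i v) - (\<Sum>i\<in>I'. c' i * f i w) / f i0 w * f i0 v"
        unfolding g_def by (simp add: right_diff_distrib sum_subtractf sum_distrib_right sum_divide_distrib mult.assoc)
      ultimately show ?thesis unfolding c_def by simp
    qed
    show ?thesis
    proof (rule exI[of _ c], intro conjI)
      from c'(1) obtain i where "i \<in> I'" "c' i \<noteq> 0" by auto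
      then show "\<exists>i\<in>I. c i \<noteq> 0" unfolding c_def I'_def by (rule_tac x=i in bexI) auto
      show "\<forall>v\<in>insert w W. (\<Sum>i\<in>I. c i * f i v) = 0"
      proof
        fix v assume "v \<in> insert w W"
        then show "(\<Sum>i\<in>I. c i * f i v) = 0"
        proof
          assume "v = w"
          then show ?thesis unfolding key g_def using i0(2) by simp
        next
          assume "v \<in> W" then show ?thesis unfolding key using c'(2) by simp
        qed
      qed
    qed
  qed
qed

locale gr =
  fixes V :: "'a set" and E :: "'a set set"
  assumes sg: "simple_graph V E"
begin

lemma finV: "finite V" using sg unfolding simple_graph_def by auto

lemma adj_in: "adj E u v \<Longrightarrow> u \<in> V \<and> v \<in> V \<and> u \<noteq> v"
proof -
  assume "adj E u v"
  then have "{u,v} \<in> E" unfolding adj_def .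
  then obtain x y where "{u,v} = {x,y}" "x \<noteq> y" "x \<in> V" "y \<in> V"
    using sg unfolding simple_graph_def by blast
  then show ?thesis by (metis doubleton_eq_iff insert_absorb2 singleton_insert_inj_eq)
qed

lemma adj_sym: "adj E u v = adj E v u" unfolding adj_def by (simp add: insert_commute)

definition Aop :: "('a \<Rightarrow> real) \<Rightarrow> 'a \<Rightarrow> real" where
  "Aop x = (\<lambda>v. adj_mult V E x v)"

definition inner :: "('a \<Rightarrow> real) \<Rightarrow> ('a \<Rightarrow> real) \<Rightarrow> real" where
  "inner x y = (\<Sum>v\<in>V. x v * y v)"

definition Z :: "('a \<Rightarrow> real) \<Rightarrow> bool" where
  "Z x \<longleftrightarrow> (\<forall>v. v \<notin> V \<longrightarrow> x v = 0)"

lemma Aop_alt: "Aop x v = (\<Sum>u\<in>V. if adj E u v then x u else 0)"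
  unfolding Aop_def adj_mult_def using finV by (simp add: sum.inter_filter)

lemma Aop_out: "v \<notin> V \<Longrightarrow> Aop x v = 0"
  unfolding Aop_alt using adj_in by (intro sum.neutral) auto

lemma Z_Aop: "Z (Aop x)" unfolding Z_def using Aop_out by auto

lemma Aop_add: "Aop (\<lambda>v. x v + y v) = (\<lambda>v. Aop x v + Aop y v)"
  unfolding Aop_alt by (auto simp: sum.distrib[symmetric] intro!: sum.cong)

lemma Aop_scale: "Aop (\<lambda>v. c * x v) = (\<lambda>v. c * Aop x v)"
  unfolding Aop_alt by (auto simp: sum_distrib_left intro!: sum.cong)

lemma Aop_zero: "Aop (\<lambda>v. 0) = (\<lambda>v. 0)"
  using Aop_scale[of 0 "\<lambda>v. 0"] by simp

lemma Aop_sum: "finite I \<Longrightarrow> Aop (\<lambda>v. \<Sum>i\<in>I. f i v) = (\<lambda>v. \<Sum>i\<in>I. Aop (f i) v)"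
  unfolding Aop_alt
  apply (rule ext)
  apply (subst sum.swap)
  apply (auto intro!: sum.cong)
  done

lemma Aop_sym: "inner (Aop x) y = inner x (Aop y)"
proof -
  have "inner (Aop x) y = (\<Sum>v\<in>V. \<Sum>u\<in>V. if adj E u v then x u * y v else 0)"
    unfolding inner_def Aop_alt by (auto simp: sum_distrib_right intro!: sum.cong)
  also have "\<dots> = (\<Sum>u\<in>V. \<Sum>v\<in>V. if adj E u v then x u * y v else 0)"
    by (rule sum.swap)
  also have "\<dots> = inner x (Aop y)"
    unfolding inner_def Aop_alt by (auto simp: sum_distrib_left adj_sym intro!: sum.cong)
  finally show ?thesis .
qed

lemma inner_pos: "Z x \<Longrightarrow> x \<noteq> (\<lambda>v. 0) \<Longrightarrow> inner x x > 0"
proof -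
  assume Z: "Z x" and nz: "x \<noteq> (\<lambda>v. 0)"
  then obtain w where w: "x w \<noteq> 0" by auto
  with Z have wV: "w \<in> V" unfolding Z_def by auto
  have "inner x x \<ge> x w * x w"
    unfolding inner_def using finV wV
    by (intro member_le_sum) auto
  moreover have "x w * x w > 0" using w by (cases "x w > 0") (auto simp: mult_neg_neg)
  ultimately show ?thesis by linarith
qed

lemma inner_eq0: "Z x \<Longrightarrow> inner x x = 0 \<Longrightarrow> x = (\<lambda>v. 0)"
  using inner_pos by fastforce

definition papply :: "real poly \<Rightarrow> ('a \<Rightarrow> real) \<Rightarrow> 'a \<Rightarrow> real" where
  "papply p x = (\<lambda>v. \<Sum>i\<le>degree p. coeff p i * (Aop ^^ i) x v)"

lemma papply_N: "degree p \<le> N \<Longrightarrow> papply p x v = (\<Sum>i\<le>N. coeff p i * (Aop ^^ i) x v)"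
proof -
  assume "degree p \<le> N"
  then have "{..N} = {..degree p} \<union> {degree p<..N}" by auto
  then have "(\<Sum>i\<le>N. coeff p i * (Aop ^^ i) x v) = (\<Sum>i\<le>degree p. coeff p i * (Aop ^^ i) x v) + (\<Sum>i\<in>{degree p<..N}. coeff p i * (Aop ^^ i) x v)"
  proof -
    assume e: "{..N} = {..degree p} \<union> {degree p<..N}"
    show ?thesis unfolding e by (rule sum.union_disjoint) auto
  qed
  moreover have "(\<Sum>i\<in>{degree p<..N}. coeff p i * (Aop ^^ i) x v) = 0"
    by (auto intro!: sum.neutral simp: coeff_eq_0)
  ultimately show ?thesis unfolding papply_def by simp
qed

lemma papply_pCons: "papply (pCons a p) x = (\<lambda>v. a * x v + Aop (papply p x) v)"
proof
  fix v
  let ?N = "degree p"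
  have "papply (pCons a p) x v = (\<Sum>i\<le>Suc ?N. coeff (pCons a p) i * (Aop ^^ i) x v)"
    by (rule papply_N) (simp add: degree_pCons_le)
  also have "\<dots> = a * x v + (\<Sum>i\<le>?N. coeff p i * (Aop ^^ Suc i) x v)"
    by (subst sum.atMost_Suc_shift) simp
  also have "(\<Sum>i\<le>?N. coeff p i * (Aop ^^ Suc i) x v) = Aop (papply p x) v"
  proof -
    have "Aop (papply p x) = Aop (\<lambda>v. \<Sum>i\<le>?N. coeff p i * (Aop ^^ i) x v)"
      unfolding papply_def ..
    also have "\<dots> = (\<lambda>v. \<Sum>i\<le>?N. Aop (\<lambda>w. coeff p i * (Aop ^^ i) x w) v)"
      by (rule Aop_sum) simp
    also have "\<dots> = (\<lambda>v. \<Sum>i\<le>?N. coeff p i * (Aop ^^ Suc i) x v)"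
      by (simp add: Aop_scale)
    finally show ?thesis by simp
  qed
  finally show "papply (pCons a p) x v = a * x v + Aop (papply p x) v" .
qed

lemma papply_0: "papply 0 x = (\<lambda>v. 0)"
  unfolding papply_def by simp

lemma papply_const: "papply [:c:] x = (\<lambda>v. c * x v)"
  unfolding papply_def by simp

lemma papply_add: "papply (p + q) x = (\<lambda>v. papply p x v + papply q x v)"
proof
  fix v
  let ?N = "max (degree p) (degree q)"
  have "degree (p + q) \<le> ?N" by (rule degree_add_le) auto
  then show "papply (p + q) x v = papply p x v + papply q x v"
    by (simp add: papply_N[of _ ?N] sum.distrib distrib_right)
qed

lemma papply_smult: "papply (smult c p) x = (\<lambda>v. c * papply p x v)"
proof
  fix v
  show "papply (smult c p) x v = c * papply p x v"
    by (simp add: papply_N[of "smult c p" "degree p"] papply_N[of p "degree p"] sum_distrib_left mult.assoc)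
qed

lemma papply_mult: "papply (p * q) x = papply p (papply q x)"
proof (induction p rule: pCons_induct)
  case 0
  then show ?case by (simp add: papply_0 Aop_scale[of 0, simplified] fun_eq_iff)
next
  case (pCons a p)
  have "papply (pCons a p * q) x = papply (smult a q + pCons 0 (p * q)) x" by simp
  also have "\<dots> = (\<lambda>v. a * papply q x v + Aop (papply (p*q) x) v)"
    by (simp add: papply_add papply_smult papply_pCons)
  also have "\<dots> = papply (pCons a p) (papply q x)"
    by (simp add: papply_pCons pCons.IH)
  finally show ?case .
qed

lemma Z_papply: "Z x \<Longrightarrow> Z (papply p x)"
  unfolding Z_def by (induction p rule: pCons_induct) (auto simp: papply_0 papply_pCons Aop_out)

lemma papply_Aop_comm: "papply p (Aop y) = Aop (papply p y)"
proof (induction p rule: pCons_induct)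
  case 0
  then show ?case using Aop_scale[of 0 y] by (simp add: papply_0)
next
  case (pCons a p)
  show ?case
    by (simp add: papply_pCons pCons.IH Aop_add Aop_scale)
qed

lemma papply_sym: "inner (papply p x) y = inner x (papply p y)"
proof (induction p arbitrary: y rule: pCons_induct)
  case 0
  then show ?case by (simp add: papply_0 inner_def)
next
  case (pCons a p)
  have "inner (papply (pCons a p) x) y = a * inner x y + inner (Aop (papply p x)) y"
    by (simp add: papply_pCons inner_def distrib_right sum.distrib sum_distrib_left mult.assoc)
  also have "inner (Aop (papply p x)) y = inner (papply p x) (Aop y)" by (rule Aop_sym)
  also have "\<dots> = inner x (papply p (Aop y))" by (rule pCons.IH)
  also have "\<dots> = inner x (Aop (papply p y))" by (simp add: papply_Aop_comm)
  finally show ?case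
    by (simp add: papply_pCons inner_def distrib_left sum.distrib sum_distrib_left mult.assoc mult.left_commute)
qed

lemma papply_eigen:
  assumes "Aop y = (\<lambda>v. \<mu> * y v)"
  shows "papply p y = (\<lambda>v. poly p \<mu> * y v)"
proof (induction p rule: pCons_induct)
  case 0
  then show ?case by (simp add: papply_0)
next
  case (pCons a p)
  have "Aop (papply p y) = (\<lambda>v. poly p \<mu> * (\<mu> * y v))"
    by (simp only: pCons.IH Aop_scale assms)
  then show ?case
    by (simp add: papply_pCons algebra_simps)
qed

definition jv :: "'a \<Rightarrow> real" where "jv = (\<lambda>v. if v \<in> V then 1 else 0)"

lemma Z_jv: "Z jv" unfolding Z_def jv_def by auto

lemma inner_jv: "inner jv y = (\<Sum>v\<in>V. y v)" unfolding inner_def jv_def by simp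

lemma papply_lin: "papply [:c, 1:] y = (\<lambda>v. c * y v + Aop y v)"
  by (simp add: papply_pCons papply_const papply_0 Aop_zero)

lemma papply_quad: "papply [:c0, c1, 1:] y = (\<lambda>v. c0 * y v + c1 * Aop y v + Aop (Aop y) v)"
  by (simp add: papply_pCons papply_const Aop_add Aop_scale papply_0 Aop_zero add.assoc)

lemma Z_eq: "Z x \<Longrightarrow> (\<forall>v\<in>V. x v = 0) \<Longrightarrow> x = (\<lambda>v. 0)"
  unfolding Z_def by auto

lemma ex_annih: "\<exists>p. p \<noteq> 0 \<and> papply p jv = (\<lambda>v. 0)"
proof -
  let ?n = "card V"
  obtain c where c: "\<exists>i\<in>{..?n}. c i \<noteq> 0" "\<forall>v\<in>V. (\<Sum>i\<in>{..?n}. c i * (Aop ^^ i) jv v) = 0"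
    using dep[OF finV, of "{..?n}" "\<lambda>i. (Aop ^^ i) jv"] by auto
  define p where "p = (\<Sum>i\<le>?n. monom (c i) i)"
  have cp: "coeff p i = (if i \<le> ?n then c i else 0)" for i
    unfolding p_def by (simp add: coeff_sum coeff_monom)
  have dp: "degree p \<le> ?n" by (rule degree_le) (simp add: cp)
  have "p \<noteq> 0" using c(1) cp by (metis atMost_iff coeff_0)
  moreover have "papply p jv = (\<lambda>v. 0)"
  proof (rule Z_eq)
    show "Z (papply p jv)" by (rule Z_papply[OF Z_jv])
    show "\<forall>v\<in>V. papply p jv v = 0"
      using c(2) by (simp add: papply_N[OF dp] cp)
  qed
  ultimately show ?thesis by blast
qed

end

lemma mp_add: "map_poly complex_of_real (p + q) = map_poly of_real p + map_poly of_real q"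
  by (rule poly_eqI) (simp add: coeff_map_poly)

lemma mp_smult: "map_poly complex_of_real (smult c p) = smult (of_real c) (map_poly of_real p)"
  by (rule poly_eqI) (simp add: coeff_map_poly)

lemma mp_mult: "map_poly complex_of_real (p * q) = map_poly of_real p * map_poly of_real q"
  by (induction p rule: pCons_induct) (simp_all add: mp_add mp_smult map_poly_pCons)

lemma poly_mp_real: "poly (map_poly complex_of_real p) (of_real x) = of_real (poly p x)"
  by (induction p rule: pCons_induct) (simp_all add: map_poly_pCons)

lemma deg_mp: "degree (map_poly complex_of_real p) = degree p"
  by (cases "p = 0") (auto intro: map_poly_degree_eq)

lemma deg1_form: "degree (r::real poly) \<le> 1 \<Longrightarrow> r = [:coeff r 0, coeff r 1:]"
  by (rule poly_eqI) (auto simp: coeff_pCons split: nat.split intro: coeff_eq_0)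

lemma real_root_of_factor:
  assumes roots_real: "\<And>z. poly (map_poly complex_of_real m) z = 0 \<Longrightarrow> Im z = 0"
    and g: "g dvd m" "m \<noteq> 0" "degree g \<ge> 1"
  shows "\<exists>\<mu>. poly g \<mu> = 0"
proof -
  have "\<not> constant (poly (map_poly complex_of_real g))"
    using g(3) by (simp add: constant_degree deg_mp)
  then obtain z where z: "poly (map_poly complex_of_real g) z = 0"
    using fundamental_theorem_of_algebra by blast
  from g(1) obtain h where "m = g * h" by (auto elim: dvdE)
  then have "poly (map_poly complex_of_real m) z = 0" using z by (simp add: mp_mult)
  then have "Im z = 0" by (rule roots_real)
  then have "z = of_real (Re z)" by (simp add: complex_eq_iff)
  then have "of_real (poly g (Re z)) = (0::complex)" using z poly_mp_real by metis
  then show ?thesis by auto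
qed

lemma three_roots:
  fixes m :: "real poly"
  assumes roots_real: "\<And>z. poly (map_poly complex_of_real m) z = 0 \<Longrightarrow> Im z = 0"
    and nodbl: "\<And>\<mu> q. m \<noteq> [:-\<mu>,1:] * ([:-\<mu>,1:] * q)"
    and m0: "m \<noteq> 0" and d3: "degree m \<ge> 3"
  shows "\<exists>\<mu>1 \<mu>2 \<mu>3. \<mu>1 \<noteq> \<mu>2 \<and> \<mu>1 \<noteq> \<mu>3 \<and> \<mu>2 \<noteq> \<mu>3 \<and> poly m \<mu>1 = 0 \<and> poly m \<mu>2 = 0 \<and> poly m \<mu>3 = 0"
proof -
  obtain \<mu>1 where r1: "poly m \<mu>1 = 0" using real_root_of_factor[OF roots_real dvd_refl m0] d3 by auto
  then have "[:-\<mu>1,1:] dvd m" by (simp add: poly_eq_0_iff_dvd)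
  then obtain m1 where m1: "m = [:-\<mu>1,1:] * m1" by (rule dvdE)
  have m10: "m1 \<noteq> 0" using m0 m1 by auto
  have dm1: "degree m1 \<ge> 2" using d3 m1 m10 degree_mult_eq[of "[:-\<mu>1,1:]" m1] by auto
  have "m1 dvd m" using m1 by (metis dvd_triv_right)
  then obtain \<mu>2 where r2: "poly m1 \<mu>2 = 0"
    using real_root_of_factor[OF roots_real _ m0] dm1 by fastforce
  then have "[:-\<mu>2,1:] dvd m1" by (simp add: poly_eq_0_iff_dvd)
  then obtain m2 where m2: "m1 = [:-\<mu>2,1:] * m2" by (rule dvdE)
  have m20: "m2 \<noteq> 0" using m10 m2 by auto
  have dm2: "degree m2 \<ge> 1" using dm1 m2 m20 degree_mult_eq[of "[:-\<mu>2,1:]" m2] by auto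
  have "m2 dvd m" using m1 m2 by (metis dvd_triv_right dvd_mult)
  then obtain \<mu>3 where r3: "poly m2 \<mu>3 = 0"
    using real_root_of_factor[OF roots_real _ m0] dm2 by fastforce
  then have "[:-\<mu>3,1:] dvd m2" by (simp add: poly_eq_0_iff_dvd)
  then obtain m3 where m3: "m2 = [:-\<mu>3,1:] * m3" by (rule dvdE)
  have "\<mu>1 \<noteq> \<mu>2" using nodbl[of \<mu>1 m2] m1 m2 by auto
  moreover have "\<mu>1 \<noteq> \<mu>3"
  proof
    assume e: "\<mu>1 = \<mu>3"
    have "m = [:-\<mu>1,1:] * ([:-\<mu>1,1:] * ([:-\<mu>2,1:] * m3))"
      unfolding m1 m2 m3 e by (simp only: ac_simps)
    then show False using nodbl by blast
  qed
  moreover have "\<mu>2 \<noteq> \<mu>3"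
  proof
    assume e: "\<mu>2 = \<mu>3"
    have "m = [:-\<mu>2,1:] * ([:-\<mu>2,1:] * ([:-\<mu>1,1:] * m3))"
      unfolding m1 m2 m3 e by (simp only: ac_simps)
    then show False using nodbl by blast
  qed
  moreover have "poly m \<mu>2 = 0" "poly m \<mu>3 = 0" using m1 m2 r2 r3 by auto
  ultimately show ?thesis using r1 by blast
qed


context gr
begin

lemma eig_from_lin:
  assumes "papply [:-\<mu>,1:] y = (\<lambda>v. 0)"
  shows "Aop y = (\<lambda>v. \<mu> * y v)"
proof
  fix v
  have "- \<mu> * y v + Aop y v = 0" using assms unfolding papply_lin by metis
  then show "Aop y v = \<mu> * y v" by simp
qed

context
  fixes m :: "real poly"
  assumes m0: "m \<noteq> 0" and mann: "papply m jv = (\<lambda>v. 0)"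
    and mmin: "\<And>q. q \<noteq> 0 \<Longrightarrow> degree q < degree m \<Longrightarrow> papply q jv \<noteq> (\<lambda>v. 0)"
begin

lemma root_main:
  assumes "poly m \<mu> = 0"
  shows "main_eigenvalue V E \<mu>"
proof -
  from assms have "[:-\<mu>,1:] dvd m" by (simp add: poly_eq_0_iff_dvd)
  then obtain q where q: "m = [:-\<mu>,1:] * q" by (rule dvdE)
  have q0: "q \<noteq> 0" using m0 q by auto
  have "degree m = Suc (degree q)" using q q0 degree_mult_eq[of "[:-\<mu>,1:]" q] by simp
  then have y0: "papply q jv \<noteq> (\<lambda>v. 0)" using mmin[OF q0] by simp
  define y where "y = papply q jv"
  have Zy: "Z y" unfolding y_def by (rule Z_papply[OF Z_jv])
  have "papply [:-\<mu>,1:] y = (\<lambda>v. 0)" using mann unfolding y_def q papply_mult .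
  then have ey: "Aop y = (\<lambda>v. \<mu> * y v)" by (rule eig_from_lin)
  have ex: "\<exists>v\<in>V. y v \<noteq> 0"
  proof (rule ccontr)
    assume "\<not> (\<exists>v\<in>V. y v \<noteq> 0)"
    then have "y = (\<lambda>v. 0)" using Z_eq[OF Zy] by auto
    then show False using y0 unfolding y_def by simp
  qed
  have "is_eigenvector V E \<mu> y"
    unfolding is_eigenvector_def using ex ey by (auto simp: Aop_def fun_eq_iff)
  moreover have "(\<Sum>v\<in>V. y v) \<noteq> 0"
  proof
    assume s0: "(\<Sum>v\<in>V. y v) = 0"
    have "inner y y = inner jv (papply q y)" unfolding y_def by (rule papply_sym)
    also have "\<dots> = inner jv (\<lambda>v. poly q \<mu> * y v)" by (simp add: papply_eigen[OF ey])
    also have "\<dots> = poly q \<mu> * (\<Sum>v\<in>V. y v)" by (simp add: inner_jv sum_distrib_left)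
    finally have "inner y y = 0" using s0 by simp
    then have "y = (\<lambda>v. 0)" by (rule inner_eq0[OF Zy])
    then show False using y0 unfolding y_def by simp
  qed
  ultimately show ?thesis unfolding main_eigenvalue_def by blast
qed

lemma no_double: "m \<noteq> [:-\<mu>,1:] * ([:-\<mu>,1:] * q)"
proof
  assume q: "m = [:-\<mu>,1:] * ([:-\<mu>,1:] * q)"
  define r where "r = [:-\<mu>,1:] * q"
  have q0: "q \<noteq> 0" using m0 q by auto
  have l0: "[:-\<mu>,1:] \<noteq> (0::real poly)" by simp
  have r0: "r \<noteq> 0" using q0 l0 unfolding r_def by (simp only: mult_eq_0_iff) simp
  have "degree m = Suc (degree r)" using q r0 degree_mult_eq[of "[:-\<mu>,1:]" r] unfolding r_def by simp
  then have y0: "papply r jv \<noteq> (\<lambda>v. 0)" using mmin[OF r0] by simp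
  define y where "y = papply r jv"
  define w where "w = papply q jv"
  have Zy: "Z y" unfolding y_def by (rule Z_papply[OF Z_jv])
  have py: "papply [:-\<mu>,1:] y = (\<lambda>v. 0)" using mann unfolding y_def q r_def papply_mult .
  have yw: "y = papply [:-\<mu>,1:] w" unfolding y_def w_def r_def papply_mult ..
  have "inner y y = inner w (papply [:-\<mu>,1:] y)" unfolding yw by (rule papply_sym)
  also have "\<dots> = 0" unfolding py by (simp add: inner_def)
  finally have "y = (\<lambda>v. 0)" by (rule inner_eq0[OF Zy])
  then show False using y0 unfolding y_def by simp
qed

lemma inner_sq_expand:
  "inner (\<lambda>v. u v - x * y v) (\<lambda>v. u v - x * y v) = inner u u - 2 * x * inner u y + x * x * inner y y"
  unfolding inner_def
  by (simp add: sum_subtractf sum.distrib sum_distrib_left algebra_simps)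

lemma inner_lin3: "inner (\<lambda>v. c0 * y v + c1 * u v + w v) y = c0 * inner y y + c1 * inner u y + inner w y"
  unfolding inner_def by (simp add: distrib_right sum.distrib sum_distrib_left mult.assoc)

lemma inner_sq_nonneg: "inner u u \<ge> 0"
  unfolding inner_def by (intro sum_nonneg) auto

lemma roots_real:
  assumes z: "poly (map_poly complex_of_real m) z = 0"
  shows "Im z = 0"
proof (rule ccontr)
  assume t0: "Im z \<noteq> 0"
  define x where "x = Re z"
  define t where "t = Im z"
  define Q where "Q = [:x*x + t*t, -2*x, 1:]"
  have Q0: "Q \<noteq> 0" unfolding Q_def by simp
  have dQ: "degree Q = 2" unfolding Q_def by simp
  have zQ: "poly (map_poly complex_of_real Q) z = 0"
  proof -
    have "poly (map_poly complex_of_real Q) z = of_real (x*x+t*t) - 2 * of_real x * z + z * z"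
      unfolding Q_def by (simp add: map_poly_pCons algebra_simps)
    also have "\<dots> = 0" unfolding x_def t_def
      by (simp add: complex_eq_iff algebra_simps power2_eq_square)
    finally show ?thesis .
  qed
  define d where "d = m div Q"
  define r where "r = m mod Q"
  have mdr: "m = Q * d + r" unfolding d_def r_def by (simp add: mult_div_mod_eq)
  have "r = 0 \<or> degree r < 2" unfolding r_def using degree_mod_less[OF Q0, of m] dQ by simp
  then have dr: "degree r \<le> 1" by auto
  have "poly (map_poly complex_of_real r) z = 0"
    using z zQ unfolding mdr by (simp add: mp_add mp_mult)
  moreover have "r = [:coeff r 0, coeff r 1:]" by (rule deg1_form[OF dr])
  ultimately have "of_real (coeff r 0) + of_real (coeff r 1) * z = (0::complex)"
    by (metis (no_types, lifting) add.right_neutral map_poly_pCons mult.commute mult_zero_left of_real_0 poly_0 poly_pCons pCons_0_0 map_poly_0)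
  then have "coeff r 0 + coeff r 1 * x = 0 \<and> coeff r 1 * t = 0"
    unfolding x_def t_def by (simp add: complex_eq_iff)
  then have "coeff r 1 = 0" "coeff r 0 = 0" using t0 unfolding t_def by auto
  then have r0: "r = 0" using \<open>r = [:coeff r 0, coeff r 1:]\<close> by simp
  then have mQ: "m = Q * d" using mdr by simp
  have d0: "d \<noteq> 0" using m0 mQ by auto
  have "degree m = degree d + 2" using mQ d0 Q0 dQ degree_mult_eq[of Q d] by simp
  then have y0: "papply d jv \<noteq> (\<lambda>v. 0)" using mmin[OF d0] by simp
  define y where "y = papply d jv"
  have Zy: "Z y" unfolding y_def by (rule Z_papply[OF Z_jv])
  have py: "papply Q y = (\<lambda>v. 0)" using mann unfolding y_def mQ papply_mult .
  then have "inner (papply Q y) y = 0" by (simp add: inner_def)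
  moreover have "inner (papply Q y) y = (x*x+t*t) * inner y y - 2*x * inner (Aop y) y + inner (Aop y) (Aop y)"
  proof -
    have "inner (papply Q y) y = (x*x+t*t) * inner y y + (-2*x) * inner (Aop y) y + inner (Aop (Aop y)) y"
      unfolding Q_def papply_quad by (rule inner_lin3)
    also have "inner (Aop (Aop y)) y = inner (Aop y) (Aop y)" by (rule Aop_sym)
    finally show ?thesis by simp
  qed
  moreover have "inner (Aop y) (Aop y) - 2 * x * inner (Aop y) y + x * x * inner y y \<ge> 0"
    using inner_sq_nonneg[of "\<lambda>v. Aop y v - x * y v"] inner_sq_expand[of "Aop y" x y] by simp
  moreover have "inner y y > 0" using inner_pos[OF Zy] y0 unfolding y_def by simp
  moreover have "t * t > 0"
  proof -
    have "t \<noteq> 0" using t0 unfolding t_def .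
    then show ?thesis by (metis linorder_neq_iff mult_neg_neg mult_pos_pos)
  qed
  moreover have "(x*x+t*t) * inner y y = x*x*inner y y + t*t*inner y y" by (simp add: distrib_right)
  ultimately have "t * t * inner y y \<le> 0" by linarith
  moreover have "t * t * inner y y > 0" using \<open>inner y y > 0\<close> \<open>t*t > 0\<close> by simp
  ultimately show False by simp
qed

end

lemma Aop_jv: "v \<in> V \<Longrightarrow> Aop jv v = real (card {u \<in> V. adj E u v})"
  unfolding Aop_def adj_mult_def jv_def by simp

theorem two_main:
  assumes c2: "card {\<mu>. main_eigenvalue V E \<mu>} = 2"
  shows "\<exists>a b. \<forall>v\<in>V. Aop (Aop jv) v = a * Aop jv v + b"
proof -
  have Vne: "V \<noteq> {}"
  proof
    assume "V = {}"
    then have "{\<mu>. main_eigenvalue V E \<mu>} = {}"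
      unfolding main_eigenvalue_def is_eigenvector_def by auto
    then show False using c2 by simp
  qed
  define P where "P k \<longleftrightarrow> (\<exists>p. p \<noteq> 0 \<and> degree p = k \<and> papply p jv = (\<lambda>v. 0))" for k
  obtain p0 where "p0 \<noteq> 0" "papply p0 jv = (\<lambda>v. 0)" using ex_annih by blast
  then have "P (degree p0)" unfolding P_def by blast
  define k where "k = (LEAST k. P k)"
  have Pk: "P k" unfolding k_def by (rule LeastI) fact
  then obtain m where m0: "m \<noteq> 0" and dm: "degree m = k" and mann: "papply m jv = (\<lambda>v. 0)"
    unfolding P_def by blast
  have mmin: "papply q jv \<noteq> (\<lambda>v. 0)" if "q \<noteq> 0" "degree q < degree m" for q
  proof
    assume "papply q jv = (\<lambda>v. 0)"
    then have "P (degree q)" using that(1) unfolding P_def by blast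
    then have "k \<le> degree q" unfolding k_def by (rule Least_le)
    then show False using that(2) dm by simp
  qed
  have fin: "finite {\<mu>. main_eigenvalue V E \<mu>}" using c2 by (metis card.infinite zero_neq_numeral)
  have dle: "degree m \<le> 2"
  proof (rule ccontr)
    assume "\<not> degree m \<le> 2"
    then have "degree m \<ge> 3" by simp
    then obtain \<mu>1 \<mu>2 \<mu>3 where mu: "\<mu>1 \<noteq> \<mu>2" "\<mu>1 \<noteq> \<mu>3" "\<mu>2 \<noteq> \<mu>3"
      "poly m \<mu>1 = 0" "poly m \<mu>2 = 0" "poly m \<mu>3 = 0"
      using three_roots[OF roots_real[OF m0 mann mmin] no_double[OF m0 mann mmin] m0] by blast
    have "{\<mu>1, \<mu>2, \<mu>3} \<subseteq> {\<mu>. main_eigenvalue V E \<mu>}"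
      using root_main[OF m0 mann mmin] mu by auto
    then have "card {\<mu>1, \<mu>2, \<mu>3} \<le> 2" using card_mono[OF fin] c2 by metis
    then show False using mu by simp
  qed
  have ev: "coeff m 0 * jv v + coeff m 1 * Aop jv v + coeff m 2 * Aop (Aop jv) v = 0" for v
  proof -
    have e2: "{..2::nat} = {0,1,2}" by auto
    have "papply m jv v = (\<Sum>i\<le>2. coeff m i * (Aop ^^ i) jv v)" by (rule papply_N[OF dle])
    also have "\<dots> = coeff m 0 * jv v + coeff m 1 * Aop jv v + coeff m 2 * Aop (Aop jv) v"
      unfolding e2 by (simp add: numeral_2_eq_2)
    finally show ?thesis using mann by (metis)
  qed
  show ?thesis
  proof (cases "coeff m 2 = 0")
    case False
    show ?thesis
    proof (rule exI[of _ "- coeff m 1 / coeff m 2"], rule exI[of _ "- coeff m 0 / coeff m 2"], intro ballI)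
      fix v assume "v \<in> V"
      then have "coeff m 0 + coeff m 1 * Aop jv v + coeff m 2 * Aop (Aop jv) v = 0"
        using ev[of v] by (simp add: jv_def)
      then show "Aop (Aop jv) v = - coeff m 1 / coeff m 2 * Aop jv v + - coeff m 0 / coeff m 2"
        using False by (simp add: field_simps)
    qed
  next
    case True
    have c1: "coeff m 1 \<noteq> 0"
    proof
      assume c10: "coeff m 1 = 0"
      have "degree m \<le> 0"
      proof (rule degree_le, intro allI impI)
        fix i :: nat assume "0 < i"
        show "coeff m i = 0"
        proof (cases "i \<le> 2")
          case True
          then have "i = 1 \<or> i = 2" using \<open>0 < i\<close> by auto
          then show ?thesis using c10 \<open>coeff m 2 = 0\<close> by auto
        next
          case False
          then show ?thesis using dle by (intro coeff_eq_0) simp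
        qed
      qed
      then obtain c where mc: "m = [:c:]" by (metis le_zero_eq degree_eq_zeroE)
      then have "c \<noteq> 0" using m0 by simp
      from Vne obtain w where "w \<in> V" by auto
      have "papply m jv w = c" using \<open>w \<in> V\<close> unfolding mc papply_const by (simp add: jv_def)
      then show False using mann \<open>c \<noteq> 0\<close> by (metis)
    qed
    define t where "t = - coeff m 0 / coeff m 1"
    have At: "Aop jv v = t" if "v \<in> V" for v
    proof -
      have "coeff m 0 + coeff m 1 * Aop jv v = 0" using ev[of v] True that by (simp add: jv_def)
      then have "coeff m 1 * Aop jv v = - coeff m 0" by linarith
      moreover have "Aop jv v = (coeff m 1 * Aop jv v) / coeff m 1" using c1 by simp
      ultimately have "Aop jv v = (- coeff m 0) / coeff m 1" by simp
      then show ?thesis unfolding t_def by simp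
    qed
    show ?thesis
    proof (rule exI[of _ t], rule exI[of _ 0], intro ballI)
      fix v assume "v \<in> V"
      have "Aop (Aop jv) v = (\<Sum>u\<in>{u \<in> V. adj E u v}. Aop jv u)" unfolding Aop_def[of "Aop jv"] adj_mult_def ..
      also have "\<dots> = (\<Sum>u\<in>{u \<in> V. adj E u v}. t)" by (rule sum.cong) (auto simp: At)
      also have "\<dots> = t * Aop jv v" using Aop_jv[OF \<open>v \<in> V\<close>] by simp
      finally show "Aop (Aop jv) v = t * Aop jv v + 0" by simp
    qed
  qed
qed

end

definition D :: "bool \<Rightarrow> real \<Rightarrow> real \<Rightarrow> bool" where
  "D P S x \<longleftrightarrow> x = 2 \<or> (P \<and> x = S)"

definition T :: "bool \<Rightarrow> real \<Rightarrow> real \<Rightarrow> real \<Rightarrow> real \<Rightarrow> real \<Rightarrow> bool" where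
  "T P S a b n r \<longleftrightarrow> (n = 2 \<and> r = 2*a + b) \<or> (P \<and> n = S \<and> r = (a-1)*S + b + 2)"

definition TE :: "bool \<Rightarrow> real \<Rightarrow> real \<Rightarrow> real \<Rightarrow> real \<Rightarrow> real \<Rightarrow> real \<Rightarrow> bool" where
  "TE P S a b h d r \<longleftrightarrow> (d = h \<and> r = (a-1)*h + b + h) \<or> (P \<and> d = S \<and> S \<ge> h + 1 \<and> r = (a-1)*S + b + h)"

definition pcl :: "bool \<Rightarrow> real \<Rightarrow> real \<Rightarrow> real \<Rightarrow> real \<Rightarrow> real \<Rightarrow> nat \<Rightarrow> real \<Rightarrow> real \<Rightarrow> real \<Rightarrow> real \<Rightarrow> bool" where
  "pcl P S a b dX dY k nX oY w z \<longleftrightarrow>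
     (k = 1 \<and> nX = dY \<and> oY = dX) \<or>
     (k = 2 \<and> nX = oY \<and> T P S a b nX (dX + dY)) \<or>
     (k = 3 \<and> D P S w \<and> D P S z \<and> T P S a b nX (dX + w) \<and> T P S a b oY (dY + z))"

lemma core_np:
  assumes "TE False S a b 3 dA (n0 + n1 + n2)" "TE False S a b 4 dB (o1 + o2 + n3 + n4)" "TE False S a b 3 dC (o0 + o3 + o4)"
    and "pcl False S a b dA dC k0 n0 o0 w0 z0" "pcl False S a b dA dB k1 n1 o1 w1 z1"
        "pcl False S a b dA dB k2 n2 o2 w2 z2" "pcl False S a b dB dC k3 n3 o3 w3 z3"
        "pcl False S a b dB dC k4 n4 o4 w4 z4"
    and "\<not> (k1 = 1 \<and> k2 = 1)" "\<not> (k3 = 1 \<and> k4 = 1)"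
  shows False
  using assms unfolding TE_def pcl_def T_def D_def
  using [[smt_timeout=600]] by (smt (z3))

lemma core3:
  assumes S: "S = 3" and "b = S - a"
    and "TE True S a b 3 dA (n0 + n1 + n2)" "TE True S a b 4 dB (o1 + o2 + n3 + n4)" "TE True S a b 3 dC (o0 + o3 + o4)"
    and "pcl True S a b dA dC k0 n0 o0 w0 z0" "pcl True S a b dA dB k1 n1 o1 w1 z1"
        "pcl True S a b dA dB k2 n2 o2 w2 z2" "pcl True S a b dB dC k3 n3 o3 w3 z3"
        "pcl True S a b dB dC k4 n4 o4 w4 z4"
    and "\<not> (k1 = 1 \<and> k2 = 1)" "\<not> (k3 = 1 \<and> k4 = 1)"
  shows False
  using assms(2-) unfolding S TE_def pcl_def T_def D_def
  using [[smt_timeout=600]] by (smt (z3))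

lemma core4:
  assumes S: "S = 4" and "b = S - a"
    and "TE True S a b 3 dA (n0 + n1 + n2)" "TE True S a b 4 dB (o1 + o2 + n3 + n4)" "TE True S a b 3 dC (o0 + o3 + o4)"
    and "pcl True S a b dA dC k0 n0 o0 w0 z0" "pcl True S a b dA dB k1 n1 o1 w1 z1"
        "pcl True S a b dA dB k2 n2 o2 w2 z2" "pcl True S a b dB dC k3 n3 o3 w3 z3"
        "pcl True S a b dB dC k4 n4 o4 w4 z4"
    and "\<not> (k1 = 1 \<and> k2 = 1)" "\<not> (k3 = 1 \<and> k4 = 1)"
  shows False
  using assms(2-) unfolding S TE_def pcl_def T_def D_def
  using [[smt_timeout=600]] by (smt (z3))

lemma core5:
  assumes S: "S = 5" and "b = S - a"
    and "TE True S a b 3 dA (n0 + n1 + n2)" "TE True S a b 4 dB (o1 + o2 + n3 + n4)" "TE True S a b 3 dC (o0 + o3 + o4)"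
    and "pcl True S a b dA dC k0 n0 o0 w0 z0" "pcl True S a b dA dB k1 n1 o1 w1 z1"
        "pcl True S a b dA dB k2 n2 o2 w2 z2" "pcl True S a b dB dC k3 n3 o3 w3 z3"
        "pcl True S a b dB dC k4 n4 o4 w4 z4"
    and "\<not> (k1 = 1 \<and> k2 = 1)" "\<not> (k3 = 1 \<and> k4 = 1)"
  shows False
  using assms(2-) unfolding S TE_def pcl_def T_def D_def
  using [[smt_timeout=600]] by (smt (z3))

lemma core6:
  assumes S: "S = 6" and "b = S - a"
    and "TE True S a b 3 dA (n0 + n1 + n2)" "TE True S a b 4 dB (o1 + o2 + n3 + n4)" "TE True S a b 3 dC (o0 + o3 + o4)"
    and "pcl True S a b dA dC k0 n0 o0 w0 z0" "pcl True S a b dA dB k1 n1 o1 w1 z1"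
        "pcl True S a b dA dB k2 n2 o2 w2 z2" "pcl True S a b dB dC k3 n3 o3 w3 z3"
        "pcl True S a b dB dC k4 n4 o4 w4 z4"
    and "\<not> (k1 = 1 \<and> k2 = 1)" "\<not> (k3 = 1 \<and> k4 = 1)"
  shows False
  using assms(2-) unfolding S TE_def pcl_def T_def D_def
  using [[smt_timeout=600]] by (smt (z3))

lemma core7:
  assumes S: "S = 7" and "b = S - a"
    and "TE True S a b 3 dA (n0 + n1 + n2)" "TE True S a b 4 dB (o1 + o2 + n3 + n4)" "TE True S a b 3 dC (o0 + o3 + o4)"
    and "pcl True S a b dA dC k0 n0 o0 w0 z0" "pcl True S a b dA dB k1 n1 o1 w1 z1"
        "pcl True S a b dA dB k2 n2 o2 w2 z2" "pcl True S a b dB dC k3 n3 o3 w3 z3"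
        "pcl True S a b dB dC k4 n4 o4 w4 z4"
    and "\<not> (k1 = 1 \<and> k2 = 1)" "\<not> (k3 = 1 \<and> k4 = 1)"
  shows False
  using assms(2-) unfolding S TE_def pcl_def T_def D_def
  using [[smt_timeout=600]] by (smt (z3))

lemma core8:
  assumes S: "S = 8" and "b = S - a"
    and "TE True S a b 3 dA (n0 + n1 + n2)" "TE True S a b 4 dB (o1 + o2 + n3 + n4)" "TE True S a b 3 dC (o0 + o3 + o4)"
    and "pcl True S a b dA dC k0 n0 o0 w0 z0" "pcl True S a b dA dB k1 n1 o1 w1 z1"
        "pcl True S a b dA dB k2 n2 o2 w2 z2" "pcl True S a b dB dC k3 n3 o3 w3 z3"
        "pcl True S a b dB dC k4 n4 o4 w4 z4"
    and "\<not> (k1 = 1 \<and> k2 = 1)" "\<not> (k3 = 1 \<and> k4 = 1)"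
  shows False
  using assms(2-) unfolding S TE_def pcl_def T_def D_def
  using [[smt_timeout=600]] by (smt (z3))

lemma bstar:
  fixes a b s dB r1 r2 r3 r4 n q :: real
  assumes s9: "s \<ge> 9" and b: "b = s - a"
    and dB: "dB = 4 \<or> dB = s"
    and r: "r1 = 2 \<or> r1 = 3 \<or> r1 = s" "r2 = 2 \<or> r2 = 3 \<or> r2 = s"
           "r3 = 2 \<or> r3 = 3 \<or> r3 = s" "r4 = 2 \<or> r4 = 3 \<or> r4 = s"
    and nr: "n = r1 \<or> n = r2 \<or> n = r3 \<or> n = r4"
    and n: "n = 2 \<or> n = s"
    and q: "q = 2 \<or> q = 3 \<or> q = s"
    and eqx: "dB + q = (a-1)*n + b + 2"
    and eqB: "r1 + r2 + r3 + r4 = (a-1)*dB + b + 4"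
  shows False
proof -
  from dB n consider "dB = 4" "n = 2" | "dB = 4" "n = s" | "dB = s" "n = 2" | "dB = s" "n = s" by blast
  then show False
  proof cases
    case 1
    then have e1: "4 + q = a + s" and e2: "r1 + r2 + r3 + r4 = 3*a + s" using eqx eqB b by (simp_all add: algebra_simps)
    show False using e1 e2 r q s9 nr 1 by (smt (z3))
  next
    case 2
    then have e1: "a*(s-1) = 2 + q" and e2: "r1 + r2 + r3 + r4 = 3*a + s" using eqx eqB b by (simp_all add: algebra_simps)
    have "a \<ge> 2" using e2 r nr 2 s9 by (smt (z3))
    then have "a*(s-1) \<ge> 2*(s-1)" using s9 by (intro mult_right_mono) auto
    then show False using e1 q s9 by (smt (z3))
  next
    case 3
    then have e1: "a = q" using eqx b by (simp add: algebra_simps)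
    have e2: "r1 + r2 + r3 + r4 = (a-1)*s + s - a + 4" using eqB b 3 by simp
    from q consider "q = 2" | "q = 3" | "q = s" by blast
    then show False
    proof cases
      case 1
      then have "r1 + r2 + r3 + r4 = 2*s + 2" using e1 e2 by (simp add: algebra_simps)
      then show False using r s9 by (smt (z3))
    next
      case 2
      then have "r1 + r2 + r3 + r4 = 3*s + 1" using e1 e2 by (simp add: algebra_simps)
      then show False using r s9 by (smt (z3))
    next
      case 3
      then have "r1 + r2 + r3 + r4 = s*s - s + 4" using e1 e2 by (simp add: algebra_simps)
      moreover have "s * s \<ge> 9 * s" using s9 by (intro mult_right_mono) auto
      ultimately show False using r s9 by (smt (z3))
    qed
  next
    case 4
    define P where "P = (a-1)*s"
    have e1: "s + q = P + s - a + 2" using eqx b 4 unfolding P_def by simp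
    have e2: "r1 + r2 + r3 + r4 = P + s - a + 4" using eqB b 4 unfolding P_def by simp
    show False using e1 e2 r q nr 4 s9 by (smt (z3))
  qed
qed

lemma T_eq: "T P S a b n r \<Longrightarrow> (n = 2 \<or> (P \<and> n = S)) \<and> r = (a-1)*n + b + 2"
  unfolding T_def by (auto simp: algebra_simps)

lemma TE_eq: "TE P S a b h d r \<Longrightarrow> (d = h \<or> (P \<and> d = S \<and> S \<ge> h + 1)) \<and> r = (a-1)*d + b + h"
  unfolding TE_def by auto

lemma bound:
  assumes S9: "S \<ge> 9" and b: "b = S - a"
    and tA: "TE True S a b 3 dA rA" and tB: "TE True S a b 4 dB (o1 + o2 + n3 + n4)" and tC: "TE True S a b 3 dC rC"
    and p1: "pcl True S a b dA dB k1 n1 o1 w1 z1" and p2: "pcl True S a b dA dB k2 n2 o2 w2 z2"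
    and p3: "pcl True S a b dB dC k3 n3 o3 w3 z3" and p4: "pcl True S a b dB dC k4 n4 o4 w4 z4"
    and k12: "\<not> (k1 = 1 \<and> k2 = 1)"
  shows False
proof -
  have dA: "dA = 3 \<or> dA = S" and dC: "dC = 3 \<or> dC = S" using TE_eq[OF tA] TE_eq[OF tC] by auto
  have dB: "dB = 4 \<or> dB = S" and eB: "o1 + o2 + n3 + n4 = (a-1)*dB + b + 4" using TE_eq[OF tB] by auto
  have r1: "o1 = 2 \<or> o1 = 3 \<or> o1 = S" using p1 dA unfolding pcl_def T_def by auto
  have r2: "o2 = 2 \<or> o2 = 3 \<or> o2 = S" using p2 dA unfolding pcl_def T_def by auto
  have r3: "n3 = 2 \<or> n3 = 3 \<or> n3 = S" using p3 dC unfolding pcl_def T_def by auto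
  have r4: "n4 = 2 \<or> n4 = 3 \<or> n4 = S" using p4 dC unfolding pcl_def T_def by auto
  have side: "\<exists>q. (q = 2 \<or> q = 3 \<or> q = S) \<and> (yv = 2 \<or> yv = S) \<and> dB + q = (a-1)*yv + b + 2"
    if p: "pcl True S a b dA dB k n yv w z" and k: "k \<noteq> 1" for k n yv w z
  proof -
    from p k consider "k = 2" "n = yv" "T True S a b yv (dA + dB)"
      | "k = 3" "D True S z" "T True S a b yv (dB + z)" unfolding pcl_def by auto
    then show ?thesis
    proof cases
      case 1
      then show ?thesis using T_eq[OF 1(3)] dA by (rule_tac x=dA in exI) (auto simp: algebra_simps)
    next
      case 2
      then show ?thesis using T_eq[OF 2(3)] unfolding D_def by (rule_tac x=z in exI) auto
    qed
  qed
  from k12 have "k1 \<noteq> 1 \<or> k2 \<noteq> 1" by auto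
  then obtain q n where q: "q = 2 \<or> q = 3 \<or> q = S" and n: "n = 2 \<or> n = S"
    and ex: "dB + q = (a-1)*n + b + 2" and nr: "n = o1 \<or> n = o2 \<or> n = n3 \<or> n = n4"
    using side[OF p1] side[OF p2] by blast
  show False by (rule bstar[OF S9 b dB r1 r2 r3 r4 nr n q ex eB])
qed

lemma arith_final:
  fixes s :: nat
  assumes Pb: "P \<Longrightarrow> b = real s - a" and Ps: "P \<Longrightarrow> s \<ge> 3"
    and tA: "TE P (real s) a b 3 dA (n0 + n1 + n2)" and tB: "TE P (real s) a b 4 dB (o1 + o2 + n3 + n4)"
    and tC: "TE P (real s) a b 3 dC (o0 + o3 + o4)"
    and p0: "pcl P (real s) a b dA dC k0 n0 o0 w0 z0" and p1: "pcl P (real s) a b dA dB k1 n1 o1 w1 z1"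
    and p2: "pcl P (real s) a b dA dB k2 n2 o2 w2 z2" and p3: "pcl P (real s) a b dB dC k3 n3 o3 w3 z3"
    and p4: "pcl P (real s) a b dB dC k4 n4 o4 w4 z4"
    and k12: "\<not> (k1 = 1 \<and> k2 = 1)" and k34: "\<not> (k3 = 1 \<and> k4 = 1)"
  shows False
proof (cases P)
  case False
  have f: "TE False (real s) a b 3 dA (n0 + n1 + n2)" "TE False (real s) a b 4 dB (o1 + o2 + n3 + n4)"
    "TE False (real s) a b 3 dC (o0 + o3 + o4)"
    "pcl False (real s) a b dA dC k0 n0 o0 w0 z0" "pcl False (real s) a b dA dB k1 n1 o1 w1 z1"
    "pcl False (real s) a b dA dB k2 n2 o2 w2 z2" "pcl False (real s) a b dB dC k3 n3 o3 w3 z3"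
    "pcl False (real s) a b dB dC k4 n4 o4 w4 z4" using tA tB tC p0 p1 p2 p3 p4 False by simp_all
  show False by (rule core_np[OF f k12 k34])
next
  case True
  note facts = tA tB tC p0 p1 p2 p3 p4
  have b: "b = real s - a" using Pb True by simp
  have facts': "TE True (real s) a b 3 dA (n0 + n1 + n2)" "TE True (real s) a b 4 dB (o1 + o2 + n3 + n4)"
    "TE True (real s) a b 3 dC (o0 + o3 + o4)"
    "pcl True (real s) a b dA dC k0 n0 o0 w0 z0" "pcl True (real s) a b dA dB k1 n1 o1 w1 z1"
    "pcl True (real s) a b dA dB k2 n2 o2 w2 z2" "pcl True (real s) a b dB dC k3 n3 o3 w3 z3"
    "pcl True (real s) a b dB dC k4 n4 o4 w4 z4" using facts True by simp_all
  have "s \<le> 8"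
  proof (rule ccontr)
    assume "\<not> s \<le> 8"
    then have "real s \<ge> 9" by simp
    then show False by (rule bound[OF _ b facts'(1,2,3,5,6,7,8) k12])
  qed
  moreover have "s \<ge> 3" using Ps True by simp
  ultimately have "s = 3 \<or> s = 4 \<or> s = 5 \<or> s = 6 \<or> s = 7 \<or> s = 8" by auto
  then show False
  proof (elim disjE)
    assume "s = 3" then have "real s = 3" by simp
    then show False by (rule core3[OF _ b facts' k12 k34])
  next
    assume "s = 4" then have "real s = 4" by simp
    then show False by (rule core4[OF _ b facts' k12 k34])
  next
    assume "s = 5" then have "real s = 5" by simp
    then show False by (rule core5[OF _ b facts' k12 k34])
  next
    assume "s = 6" then have "real s = 6" by simp
    then show False by (rule core6[OF _ b facts' k12 k34])
  next
    assume "s = 7" then have "real s = 7" by simp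
    then show False by (rule core7[OF _ b facts' k12 k34])
  next
    assume "s = 8" then have "real s = 8" by simp
    then show False by (rule core8[OF _ b facts' k12 k34])
  qed
qed

definition pnb :: "'a list \<Rightarrow> 'a \<Rightarrow> 'a set" where
  "pnb p v = {u. {u, v} \<in> path_edges p}"

lemma pnb_nth:
  assumes d: "distinct p" and j: "j < length p"
  shows "pnb p (p ! j) = (if 0 < j then {p ! (j - 1)} else {}) \<union> (if Suc j < length p then {p ! Suc j} else {})"
proof (intro set_eqI iffI)
  fix u assume "u \<in> pnb p (p ! j)"
  then obtain i where i: "{u, p ! j} = {p ! i, p ! Suc i}" "Suc i < length p"
    unfolding pnb_def path_edges_def by auto
  from i(1) have "(u = p ! i \<and> p ! j = p ! Suc i) \<or> (u = p ! Suc i \<and> p ! j = p ! i)"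
    by (auto simp: doubleton_eq_iff)
  then show "u \<in> (if 0 < j then {p ! (j - 1)} else {}) \<union> (if Suc j < length p then {p ! Suc j} else {})"
  proof
    assume h: "u = p ! i \<and> p ! j = p ! Suc i"
    then have "j = Suc i" using d j i(2) nth_eq_iff_index_eq by blast
    then show ?thesis using h by auto
  next
    assume h: "u = p ! Suc i \<and> p ! j = p ! i"
    then have "j = i" using d j i(2) nth_eq_iff_index_eq by (metis Suc_lessD)
    then show ?thesis using h i(2) by auto
  qed
next
  fix u assume u: "u \<in> (if 0 < j then {p ! (j - 1)} else {}) \<union> (if Suc j < length p then {p ! Suc j} else {})"
  show "u \<in> pnb p (p ! j)"
  proof (cases "0 < j \<and> u = p ! (j - 1)")
    case True
    then have "{u, p ! j} = {p ! (j - 1), p ! Suc (j - 1)}" by auto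
    moreover have "Suc (j - 1) < length p" using True j by auto
    ultimately show ?thesis unfolding pnb_def path_edges_def by blast
  next
    case False
    then have "Suc j < length p" "u = p ! Suc j" using u by (auto split: if_splits)
    then show ?thesis unfolding pnb_def path_edges_def by blast
  qed
qed

lemma path_edges_subset: "e \<in> path_edges p \<Longrightarrow> e \<subseteq> set p"
  unfolding path_edges_def by auto

lemma pnb_notin: "v \<notin> set p \<Longrightarrow> pnb p v = {}"
  unfolding pnb_def using path_edges_subset by blast

lemma interior_nth: "interior p = {p ! j | j. 0 < j \<and> j < length p - 1}"
proof -
  have bn: "butlast (tl p) ! k = p ! Suc k" if "k < length p - 2" for k
    using that by (simp add: nth_butlast nth_tl)
  have lb: "length (butlast (tl p)) = length p - 2" by simp
  show ?thesis
  proof (intro set_eqI iffI)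
    fix x assume "x \<in> interior p"
    then obtain k where k: "k < length p - 2" "x = butlast (tl p) ! k"
      unfolding interior_def by (auto simp: in_set_conv_nth numeral_2_eq_2)
    then have "x = p ! Suc k" "0 < Suc k" "Suc k < length p - 1" using bn by auto
    then show "x \<in> {p ! j | j. 0 < j \<and> j < length p - 1}" by blast
  next
    fix x assume "x \<in> {p ! j | j. 0 < j \<and> j < length p - 1}"
    then obtain j where j: "0 < j" "j < length p - 1" "x = p ! j" by blast
    then obtain k where k: "j = Suc k" by (cases j) auto
    then have "k < length p - 2" using j by auto
    then have "x = butlast (tl p) ! k" "k < length (butlast (tl p))" using bn j k by auto
    then show "x \<in> interior p" unfolding interior_def by auto
  qed
qed

lemma path_set:
  assumes "is_path_between p X Y"
  shows "set p = {X, Y} \<union> interior p" "p ! 0 = X" "p ! (length p - 1) = Y" "length p \<ge> 2" "distinct p"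
proof -
  have l: "length p \<ge> 2" "distinct p" "hd p = X" "last p = Y" using assms unfolding is_path_between_def by auto
  have ne: "p \<noteq> []" using l by auto
  show "p ! 0 = X" using l ne by (metis hd_conv_nth)
  show "p ! (length p - 1) = Y" using l ne by (metis last_conv_nth)
  show "length p \<ge> 2" "distinct p" using l by auto
  show "set p = {X, Y} \<union> interior p"
  proof
    show "set p \<subseteq> {X, Y} \<union> interior p"
    proof
      fix v assume "v \<in> set p"
      then obtain j where j: "j < length p" "v = p ! j" by (auto simp: in_set_conv_nth)
      show "v \<in> {X, Y} \<union> interior p"
      proof (cases "j = 0")
        case True then show ?thesis using j \<open>p ! 0 = X\<close> by auto
      next
        case False
        show ?thesis
        proof (cases "j = length p - 1")
          case True then show ?thesis using j \<open>p ! (length p - 1) = Y\<close> by auto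
        next
          case False2: False
          then show ?thesis using False j unfolding interior_nth by auto
        qed
      qed
    qed
    show "{X, Y} \<union> interior p \<subseteq> set p"
    proof -
      have "X \<in> set p" using l ne \<open>p ! 0 = X\<close> by (metis hd_in_set)
      moreover have "Y \<in> set p" using l ne by (metis last_in_set)
      moreover have "interior p \<subseteq> set p" unfolding interior_nth by auto
      ultimately show ?thesis by auto
    qed
  qed
qed


locale t5 =
  fixes V0 :: "'a set" and E0 :: "'a set set" and A B C :: 'a and p1 p2 p3 p4 p5 :: "'a list"
  assumes dABC: "distinct [A, B, C]"
    and P1: "is_path_between p1 A C" and P2: "is_path_between p2 A B" and P3: "is_path_between p3 A B"
    and P4: "is_path_between p4 B C" and P5: "is_path_between p5 B C"
    and intABC: "\<forall>i<5. interior ([p1, p2, p3, p4, p5] ! i) \<inter> {A, B, C} = {}"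
    and intdisj: "\<forall>i<5. \<forall>j<5. i \<noteq> j \<longrightarrow> interior ([p1, p2, p3, p4, p5] ! i) \<inter> set ([p1, p2, p3, p4, p5] ! j) = {}"
    and edisj: "\<forall>i<5. \<forall>j<5. i \<noteq> j \<longrightarrow> path_edges ([p1, p2, p3, p4, p5] ! i) \<inter> path_edges ([p1, p2, p3, p4, p5] ! j) = {}"
    and V0: "V0 = (\<Union>i<5. set ([p1, p2, p3, p4, p5] ! i))"
    and E0: "E0 = (\<Union>i<5. path_edges ([p1, p2, p3, p4, p5] ! i))"
begin

definition ps where "ps = [p1, p2, p3, p4, p5]"
definition Xs where "Xs = [A, A, A, B, B]"
definition Ys where "Ys = [C, B, B, C, C]"
definition nb0 where "nb0 v = {u. {u, v} \<in> E0}"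

lemma less5: "(i::nat) < 5 \<longleftrightarrow> i = 0 \<or> i = 1 \<or> i = 2 \<or> i = 3 \<or> i = 4" by auto

lemma pathi: "i < 5 \<Longrightarrow> is_path_between (ps ! i) (Xs ! i) (Ys ! i)"
  unfolding less5 ps_def Xs_def Ys_def using P1 P2 P3 P4 P5 by auto

lemma XYi: "i < 5 \<Longrightarrow> Xs ! i \<in> {A, B, C} \<and> Ys ! i \<in> {A, B, C} \<and> Xs ! i \<noteq> Ys ! i"
  unfolding less5 Xs_def Ys_def using dABC by auto

lemma nb0_union: "nb0 v = (\<Union>k<5. pnb (ps ! k) v)"
  unfolding nb0_def pnb_def by (auto simp: E0 ps_def)

lemma int_sub: "interior p \<subseteq> set p" unfolding interior_def by (cases p) (auto dest: in_set_butlastD)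

lemma intABC': "i < 5 \<Longrightarrow> interior (ps ! i) \<inter> {A, B, C} = {}" using intABC unfolding ps_def by blast
lemma intdisj': "i < 5 \<Longrightarrow> j < 5 \<Longrightarrow> i \<noteq> j \<Longrightarrow> interior (ps ! i) \<inter> set (ps ! j) = {}"
  using intdisj unfolding ps_def by blast
lemma edisj': "i < 5 \<Longrightarrow> j < 5 \<Longrightarrow> i \<noteq> j \<Longrightarrow> path_edges (ps ! i) \<inter> path_edges (ps ! j) = {}"
  using edisj unfolding ps_def by blast

lemma union_single:
  assumes i: "i < (5::nat)" and oth: "\<And>k. k < 5 \<Longrightarrow> k \<noteq> i \<Longrightarrow> f k = {}"
  shows "(\<Union>k<5. f k) = f i"
proof
  show "(\<Union>k<5. f k) \<subseteq> f i"
  proof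
    fix x assume "x \<in> (\<Union>k<5. f k)"
    then obtain k where k: "k < 5" "x \<in> f k" by blast
    then show "x \<in> f i" using oth by (cases "k = i") auto
  qed
  show "f i \<subseteq> (\<Union>k<5. f k)" using i by blast
qed

lemma nb_int:
  assumes i: "i < 5" and j: "0 < j" "j < length (ps ! i) - 1"
  shows "nb0 (ps ! i ! j) = {ps ! i ! (j - 1), ps ! i ! Suc j}"
    and "ps ! i ! (j - 1) \<noteq> ps ! i ! Suc j"
    and "ps ! i ! j \<in> interior (ps ! i)"
    and "ps ! i ! j \<notin> {A, B, C}"
    and "ps ! i ! j \<in> V0"
proof -
  note pp = path_set[OF pathi[OF i]]
  show vi: "ps ! i ! j \<in> interior (ps ! i)" unfolding interior_nth using j by auto
  have oth: "pnb (ps ! k) (ps ! i ! j) = {}" if "k < 5" "k \<noteq> i" for k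
  proof (rule pnb_notin)
    have "interior (ps ! i) \<inter> set (ps ! k) = {}" using intdisj'[OF i that(1)] that(2) by simp
    then show "ps ! i ! j \<notin> set (ps ! k)" using vi by blast
  qed
  have own: "pnb (ps ! i) (ps ! i ! j) = {ps ! i ! (j - 1), ps ! i ! Suc j}"
    using pnb_nth[OF pp(5), of j] j by auto
  show "nb0 (ps ! i ! j) = {ps ! i ! (j - 1), ps ! i ! Suc j}"
  proof -
    have "nb0 (ps ! i ! j) = pnb (ps ! i) (ps ! i ! j)"
      unfolding nb0_union by (rule union_single[OF i]) (rule oth)
    then show ?thesis using own by simp
  qed
  show "ps ! i ! (j - 1) \<noteq> ps ! i ! Suc j"
    using pp(5) j by (simp add: nth_eq_iff_index_eq)
  show "ps ! i ! j \<notin> {A, B, C}" using vi intABC'[OF i] by auto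
  have "ps ! i ! j \<in> set (ps ! i)" using vi int_sub[of "ps ! i"] by blast
  then show "ps ! i ! j \<in> V0" using i unfolding V0 ps_def by blast
qed

lemma pnb_end:
  assumes k: "k < 5" and v: "v \<in> {A, B, C}"
  shows "pnb (ps ! k) v = (if v = Xs ! k then {ps ! k ! 1} else {}) \<union> (if v = Ys ! k then {ps ! k ! (length (ps ! k) - 2)} else {})"
proof -
  note pp = path_set[OF pathi[OF k]]
  note xy = XYi[OF k]
  show ?thesis
  proof (cases "v \<in> set (ps ! k)")
    case False
    then have "v \<noteq> Xs ! k" "v \<noteq> Ys ! k" using pp(1) by auto
    then show ?thesis using pnb_notin[OF False] by simp
  next
    case True
    then have "v \<in> {Xs ! k, Ys ! k} \<union> interior (ps ! k)" using pp(1) by simp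
    moreover have "v \<notin> interior (ps ! k)" using intABC'[OF k] v by blast
    ultimately have "v = Xs ! k \<or> v = Ys ! k" by blast
    then show ?thesis
    proof
      assume vx: "v = Xs ! k"
      have l2: "Suc 0 < length (ps ! k)" using pp(4) by simp
      have "pnb (ps ! k) (ps ! k ! 0) = {ps ! k ! Suc 0}"
        using pnb_nth[OF pp(5), of 0] l2 by (simp add: less_imp_neq) (metis gr_implies_not0 list.size(3))
      then have "pnb (ps ! k) v = {ps ! k ! 1}" using pp(2) vx by simp
      moreover have "v \<noteq> Ys ! k" using vx xy by simp
      ultimately show ?thesis using vx by simp
    next
      assume vy: "v = Ys ! k"
      define L where "L = length (ps ! k)"
      have L: "L \<ge> 2" using pp(4) unfolding L_def .
      have "pnb (ps ! k) (ps ! k ! (L - 1)) = {ps ! k ! (L - 1 - 1)}"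
        using pnb_nth[OF pp(5), of "L - 1"] L unfolding L_def[symmetric] by simp
      moreover have "L - 1 - 1 = L - 2" by simp
      ultimately have "pnb (ps ! k) v = {ps ! k ! (L - 2)}" using pp(3) vy unfolding L_def by simp
      moreover have "v \<noteq> Xs ! k" using vy xy by metis
      ultimately show ?thesis using vy unfolding L_def by simp
    qed
  qed
qed

lemma U5: "(\<Union>k<5. f k) = f 0 \<union> f 1 \<union> f 2 \<union> f 3 \<union> f (4::nat)"
proof -
  have "{..<5::nat} = {0,1,2,3,4}" by auto
  then show ?thesis by (simp add: Un_assoc)
qed

lemma second: "k < 5 \<Longrightarrow> ps ! k ! 1 \<in> interior (ps ! k) \<or> (ps ! k ! 1 = Ys ! k \<and> length (ps ! k) = 2)"
proof -
  assume k: "k < 5"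
  note pp = path_set[OF pathi[OF k]]
  show ?thesis
  proof (cases "length (ps ! k) = 2")
    case True then show ?thesis using pp(3) by auto
  next
    case False then show ?thesis using pp(4) unfolding interior_nth by auto
  qed
qed

lemma penult: "k < 5 \<Longrightarrow> ps ! k ! (length (ps ! k) - 2) \<in> interior (ps ! k) \<or> (ps ! k ! (length (ps ! k) - 2) = Xs ! k \<and> length (ps ! k) = 2)"
proof -
  assume k: "k < 5"
  note pp = path_set[OF pathi[OF k]]
  show ?thesis
  proof (cases "length (ps ! k) = 2")
    case True then show ?thesis using pp(2) by auto
  next
    case False then show ?thesis using pp(4) unfolding interior_nth by (auto intro!: exI[of _ "length (ps ! k) - 2"])
  qed
qed

lemma edge2: "k < 5 \<Longrightarrow> length (ps ! k) = 2 \<Longrightarrow> {Xs ! k, Ys ! k} \<in> path_edges (ps ! k)"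
proof -
  assume k: "k < 5" and l: "length (ps ! k) = 2"
  note pp = path_set[OF pathi[OF k]]
  have "{ps ! k ! 0, ps ! k ! Suc 0} \<in> path_edges (ps ! k)" unfolding path_edges_def using l by auto
  then show ?thesis using pp(2,3) l by simp
qed

lemma not_both2: "k < 5 \<Longrightarrow> l < 5 \<Longrightarrow> k \<noteq> l \<Longrightarrow> Xs ! k = Xs ! l \<Longrightarrow> Ys ! k = Ys ! l \<Longrightarrow>
  \<not> (length (ps ! k) = 2 \<and> length (ps ! l) = 2)"
proof
  assume k: "k < 5" "l < 5" "k \<noteq> l" and eq: "Xs ! k = Xs ! l" "Ys ! k = Ys ! l"
    and ll: "length (ps ! k) = 2 \<and> length (ps ! l) = 2"
  have "{Xs ! k, Ys ! k} \<in> path_edges (ps ! k)" using edge2 k ll by blast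
  moreover have "{Xs ! k, Ys ! k} \<in> path_edges (ps ! l)" using edge2[of l] k ll eq by simp
  ultimately show False using edisj'[OF k] by blast
qed

lemma meet:
  assumes k: "k < 5" "l < 5" "k \<noteq> l"
    and u: "u \<in> interior (ps ! k) \<or> u = Ek" and w: "w \<in> interior (ps ! l) \<or> w = El"
    and E: "Ek \<in> {A, B, C}" "El \<in> {A, B, C}" and uw: "u = w"
  shows "u = Ek \<and> w = El"
proof -
  have "u \<notin> interior (ps ! k)"
  proof
    assume ui: "u \<in> interior (ps ! k)"
    from w show False
    proof
      assume "w \<in> interior (ps ! l)"
      then have "w \<in> set (ps ! l)" using int_sub[of "ps ! l"] by blast
      then show False using intdisj'[OF k] ui uw by auto
    next
      assume "w = El" then show False using ui uw E intABC'[OF k(1)] by auto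
    qed
  qed
  moreover have "w \<notin> interior (ps ! l)"
  proof
    assume wi: "w \<in> interior (ps ! l)"
    from u show False
    proof
      assume "u \<in> interior (ps ! k)"
      then have "u \<in> set (ps ! k)" using int_sub[of "ps ! k"] by blast
      then show False using intdisj'[OF k(2) k(1)] k(3) wi uw by auto
    next
      assume "u = Ek" then show False using wi uw E intABC'[OF k(2)] by auto
    qed
  qed
  ultimately show ?thesis using u w by auto
qed

lemma V0_cases: "v \<in> V0 \<Longrightarrow> v \<in> {A, B, C} \<or> (\<exists>i j. i < 5 \<and> 0 < j \<and> j < length (ps ! i) - 1 \<and> v = ps ! i ! j)"
proof -
  assume "v \<in> V0"
  then obtain i where i: "i < 5" "v \<in> set (ps ! i)" unfolding V0 ps_def by auto
  then have "v \<in> {Xs ! i, Ys ! i} \<or> v \<in> interior (ps ! i)" using path_set(1)[OF pathi[OF i(1)]] by auto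
  then show ?thesis
  proof
    assume "v \<in> {Xs ! i, Ys ! i}"
    then show ?thesis using XYi[OF i(1)] by auto
  next
    assume "v \<in> interior (ps ! i)"
    then obtain j where "0 < j" "j < length (ps ! i) - 1" "v = ps ! i ! j" unfolding interior_nth by auto
    then show ?thesis using i(1) by blast
  qed
qed

lemma ABC_V0: "A \<in> V0" "B \<in> V0" "C \<in> V0"
proof -
  have "A \<in> set p1" "C \<in> set p1" "B \<in> set p2" using path_set(1)[OF P1] path_set(1)[OF P2] by auto
  moreover have "set ([p1, p2, p3, p4, p5] ! 0) \<subseteq> V0" unfolding V0 by (rule UN_upper) simp
  moreover have "set ([p1, p2, p3, p4, p5] ! 1) \<subseteq> V0" unfolding V0 by (rule UN_upper) simp
  ultimately show "A \<in> V0" "B \<in> V0" "C \<in> V0" by auto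
qed

lemma sec_int: "k < 5 \<Longrightarrow> ps ! k ! 1 \<in> interior (ps ! k) \<or> ps ! k ! 1 = Ys ! k"
  using second by blast
lemma pen_int: "k < 5 \<Longrightarrow> ps ! k ! (length (ps ! k) - 2) \<in> interior (ps ! k) \<or> ps ! k ! (length (ps ! k) - 2) = Xs ! k"
  using penult by blast

lemma sec_eq_end: "k < 5 \<Longrightarrow> ps ! k ! 1 = Ys ! k \<Longrightarrow> length (ps ! k) = 2"
  using second[of k] XYi[of k] intABC'[of k] by auto
lemma pen_eq_end: "k < 5 \<Longrightarrow> ps ! k ! (length (ps ! k) - 2) = Xs ! k \<Longrightarrow> length (ps ! k) = 2"
  using penult[of k] XYi[of k] intABC'[of k] by auto

lemma nbA: "nb0 A = {ps ! 0 ! 1, ps ! 1 ! 1, ps ! 2 ! 1}"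
  "ps ! 0 ! 1 \<noteq> ps ! 1 ! 1" "ps ! 0 ! 1 \<noteq> ps ! 2 ! 1" "ps ! 1 ! 1 \<noteq> ps ! 2 ! 1"
proof -
  have AB: "A \<in> {A, B, C}" by simp
  have dd: "A \<noteq> B" "A \<noteq> C" "B \<noteq> C" using dABC by auto
  show "nb0 A = {ps ! 0 ! 1, ps ! 1 ! 1, ps ! 2 ! 1}"
    unfolding nb0_union U5 using pnb_end[OF _ AB] dd by (simp add: Xs_def Ys_def insert_commute)
  show "ps ! 0 ! 1 \<noteq> ps ! 1 ! 1"
    using meet[of 0 1, OF _ _ _ sec_int[of 0] sec_int[of 1]] dd by (auto simp: Ys_def)
  show "ps ! 0 ! 1 \<noteq> ps ! 2 ! 1"
    using meet[of 0 2, OF _ _ _ sec_int[of 0] sec_int[of 2]] dd by (auto simp: Ys_def)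
  show "ps ! 1 ! 1 \<noteq> ps ! 2 ! 1"
  proof
    assume e: "ps ! 1 ! 1 = ps ! 2 ! 1"
    then have "ps ! 1 ! 1 = Ys ! 1 \<and> ps ! 2 ! 1 = Ys ! 2"
      using meet[of 1 2, OF _ _ _ sec_int[of 1] sec_int[of 2]] by (auto simp: Ys_def)
    then have "length (ps ! 1) = 2 \<and> length (ps ! 2) = 2" using sec_eq_end by auto
    then show False using not_both2[of 1 2] by (simp add: Xs_def Ys_def)
  qed
qed

lemma nbC: "nb0 C = {ps ! 0 ! (length (ps ! 0) - 2), ps ! 3 ! (length (ps ! 3) - 2), ps ! 4 ! (length (ps ! 4) - 2)}"
  "ps ! 0 ! (length (ps ! 0) - 2) \<noteq> ps ! 3 ! (length (ps ! 3) - 2)"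
  "ps ! 0 ! (length (ps ! 0) - 2) \<noteq> ps ! 4 ! (length (ps ! 4) - 2)"
  "ps ! 3 ! (length (ps ! 3) - 2) \<noteq> ps ! 4 ! (length (ps ! 4) - 2)"
proof -
  have AB: "C \<in> {A, B, C}" by simp
  have dd: "A \<noteq> B" "A \<noteq> C" "B \<noteq> C" using dABC by auto
  show "nb0 C = {ps ! 0 ! (length (ps ! 0) - 2), ps ! 3 ! (length (ps ! 3) - 2), ps ! 4 ! (length (ps ! 4) - 2)}"
    unfolding nb0_union U5 using pnb_end[OF _ AB] dd by (simp add: Xs_def Ys_def insert_commute)
  show "ps ! 0 ! (length (ps ! 0) - 2) \<noteq> ps ! 3 ! (length (ps ! 3) - 2)"
    using meet[of 0 3, OF _ _ _ pen_int[of 0] pen_int[of 3]] dd by (auto simp: Xs_def)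
  show "ps ! 0 ! (length (ps ! 0) - 2) \<noteq> ps ! 4 ! (length (ps ! 4) - 2)"
    using meet[of 0 4, OF _ _ _ pen_int[of 0] pen_int[of 4]] dd by (auto simp: Xs_def)
  show "ps ! 3 ! (length (ps ! 3) - 2) \<noteq> ps ! 4 ! (length (ps ! 4) - 2)"
  proof
    assume e: "ps ! 3 ! (length (ps ! 3) - 2) = ps ! 4 ! (length (ps ! 4) - 2)"
    then have "ps ! 3 ! (length (ps ! 3) - 2) = Xs ! 3 \<and> ps ! 4 ! (length (ps ! 4) - 2) = Xs ! 4"
      using meet[of 3 4, OF _ _ _ pen_int[of 3] pen_int[of 4]] by (auto simp: Xs_def)
    then have "length (ps ! 3) = 2 \<and> length (ps ! 4) = 2" using pen_eq_end by auto
    then show False using not_both2[of 3 4] by (simp add: Xs_def Ys_def)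
  qed
qed

lemma nbB: "nb0 B = {ps ! 1 ! (length (ps ! 1) - 2), ps ! 2 ! (length (ps ! 2) - 2), ps ! 3 ! 1, ps ! 4 ! 1}"
  "ps ! 1 ! (length (ps ! 1) - 2) \<noteq> ps ! 2 ! (length (ps ! 2) - 2)"
  "ps ! 1 ! (length (ps ! 1) - 2) \<noteq> ps ! 3 ! 1"
  "ps ! 1 ! (length (ps ! 1) - 2) \<noteq> ps ! 4 ! 1"
  "ps ! 2 ! (length (ps ! 2) - 2) \<noteq> ps ! 3 ! 1"
  "ps ! 2 ! (length (ps ! 2) - 2) \<noteq> ps ! 4 ! 1"
  "ps ! 3 ! 1 \<noteq> ps ! 4 ! 1"
proof -
  have AB: "B \<in> {A, B, C}" by simp
  have dd: "A \<noteq> B" "A \<noteq> C" "B \<noteq> C" using dABC by auto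
  show "nb0 B = {ps ! 1 ! (length (ps ! 1) - 2), ps ! 2 ! (length (ps ! 2) - 2), ps ! 3 ! 1, ps ! 4 ! 1}"
    unfolding nb0_union U5 using pnb_end[OF _ AB] dd by (simp add: Xs_def Ys_def insert_commute)
  show "ps ! 1 ! (length (ps ! 1) - 2) \<noteq> ps ! 2 ! (length (ps ! 2) - 2)"
  proof
    assume e: "ps ! 1 ! (length (ps ! 1) - 2) = ps ! 2 ! (length (ps ! 2) - 2)"
    then have "ps ! 1 ! (length (ps ! 1) - 2) = Xs ! 1 \<and> ps ! 2 ! (length (ps ! 2) - 2) = Xs ! 2"
      using meet[of 1 2, OF _ _ _ pen_int[of 1] pen_int[of 2]] by (auto simp: Xs_def)
    then have "length (ps ! 1) = 2 \<and> length (ps ! 2) = 2" using pen_eq_end by auto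
    then show False using not_both2[of 1 2] by (simp add: Xs_def Ys_def)
  qed
  show "ps ! 1 ! (length (ps ! 1) - 2) \<noteq> ps ! 3 ! 1"
    using meet[of 1 3, OF _ _ _ pen_int[of 1] sec_int[of 3]] dd by (auto simp: Xs_def Ys_def)
  show "ps ! 1 ! (length (ps ! 1) - 2) \<noteq> ps ! 4 ! 1"
    using meet[of 1 4, OF _ _ _ pen_int[of 1] sec_int[of 4]] dd by (auto simp: Xs_def Ys_def)
  show "ps ! 2 ! (length (ps ! 2) - 2) \<noteq> ps ! 3 ! 1"
    using meet[of 2 3, OF _ _ _ pen_int[of 2] sec_int[of 3]] dd by (auto simp: Xs_def Ys_def)
  show "ps ! 2 ! (length (ps ! 2) - 2) \<noteq> ps ! 4 ! 1"
    using meet[of 2 4, OF _ _ _ pen_int[of 2] sec_int[of 4]] dd by (auto simp: Xs_def Ys_def)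
  show "ps ! 3 ! 1 \<noteq> ps ! 4 ! 1"
  proof
    assume e: "ps ! 3 ! 1 = ps ! 4 ! 1"
    then have "ps ! 3 ! 1 = Ys ! 3 \<and> ps ! 4 ! 1 = Ys ! 4"
      using meet[of 3 4, OF _ _ _ sec_int[of 3] sec_int[of 4]] by (auto simp: Ys_def)
    then have "length (ps ! 3) = 2 \<and> length (ps ! 4) = 2" using sec_eq_end by auto
    then show False using not_both2[of 3 4] by (simp add: Xs_def Ys_def)
  qed
qed


lemma h_ge2: "v \<in> V0 \<Longrightarrow> card (nb0 v) \<ge> 2"
proof -
  assume v: "v \<in> V0"
  from V0_cases[OF v] show ?thesis
  proof
    assume "v \<in> {A, B, C}"
    then consider "v = A" | "v = B" | "v = C" by auto
    then show ?thesis
    proof cases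
      case 1 then show ?thesis using nbA by simp
    next
      case 2 then show ?thesis using nbB by simp
    next
      case 3 then show ?thesis using nbC by simp
    qed
  next
    assume "\<exists>i j. i < 5 \<and> 0 < j \<and> j < length (ps ! i) - 1 \<and> v = ps ! i ! j"
    then obtain i j where "i < 5" "0 < j" "j < length (ps ! i) - 1" "v = ps ! i ! j" by blast
    then show ?thesis using nb_int(1,2) by simp
  qed
qed

end

lemma T_intro: "D P S n \<Longrightarrow> r = (a-1)*n + b + 2 \<Longrightarrow> T P S a b n r"
  unfolding D_def T_def by (auto simp: algebra_simps)

lemma TE_intro: "d = h \<or> (P \<and> d = S \<and> S \<ge> h + 1) \<Longrightarrow> r = (a-1)*d + b + h \<Longrightarrow> TE P S a b h d r"
  unfolding TE_def by auto

locale t5s = t5 +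
  fixes dg :: "'a \<Rightarrow> real" and a b :: real and sn :: nat and Pd :: bool
  assumes eqv: "\<And>v. v \<in> V0 \<Longrightarrow> (\<Sum>u\<in>nb0 v. dg u) = (a-1) * dg v + b + real (card (nb0 v))"
    and dgv: "\<And>v. v \<in> V0 \<Longrightarrow> dg v = real (card (nb0 v)) \<or> (Pd \<and> dg v = real sn \<and> real sn \<ge> real (card (nb0 v)) + 1)"
    and Pb: "Pd \<Longrightarrow> b = real sn - a" and Ps: "Pd \<Longrightarrow> sn \<ge> 3"
begin

lemma int_T:
  assumes i: "i < 5" and j: "0 < j" "j < length (ps ! i) - 1"
  shows "D Pd (real sn) (dg (ps ! i ! j))"
    and "T Pd (real sn) a b (dg (ps ! i ! j)) (dg (ps ! i ! (j - 1)) + dg (ps ! i ! Suc j))"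
proof -
  note f = nb_int[OF i j]
  have c2: "card (nb0 (ps ! i ! j)) = 2" using f(1,2) by simp
  have s2: "(\<Sum>u\<in>nb0 (ps ! i ! j). dg u) = dg (ps ! i ! (j - 1)) + dg (ps ! i ! Suc j)"
    using f(1,2) by simp
  show D: "D Pd (real sn) (dg (ps ! i ! j))" using dgv[OF f(5)] c2 unfolding D_def by auto
  show "T Pd (real sn) a b (dg (ps ! i ! j)) (dg (ps ! i ! (j - 1)) + dg (ps ! i ! Suc j))"
    using T_intro[OF D] eqv[OF f(5)] c2 s2 by simp
qed

lemma path_pcl:
  assumes i: "i < 5"
  shows "\<exists>k w z. pcl Pd (real sn) a b (dg (Xs ! i)) (dg (Ys ! i)) k (dg (ps ! i ! 1)) (dg (ps ! i ! (length (ps ! i) - 2))) w z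
     \<and> (k = 1 \<longleftrightarrow> length (ps ! i) = 2)"
proof -
  note pp = path_set[OF pathi[OF i]]
  define L where "L = length (ps ! i)"
  have L2: "L \<ge> 2" using pp(4) unfolding L_def .
  have p0: "ps ! i ! 0 = Xs ! i" using pp(2) .
  have pL: "ps ! i ! (L - 1) = Ys ! i" using pp(3) unfolding L_def .
  consider "L = 2" | "L = 3" | "L \<ge> 4" using L2 by linarith
  then show ?thesis
  proof cases
    case 1
    have "ps ! i ! 1 = Ys ! i" using pL 1 by simp
    moreover have "ps ! i ! (L - 2) = Xs ! i" using p0 1 by simp
    ultimately show ?thesis unfolding pcl_def L_def[symmetric] using 1
      by (rule_tac x=1 in exI) auto
  next
    case 2
    have t: "T Pd (real sn) a b (dg (ps ! i ! 1)) (dg (ps ! i ! 0) + dg (ps ! i ! 2))"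
      using int_T(2)[OF i, of 1] 2 unfolding L_def by (simp add: numeral_2_eq_2)
    have "ps ! i ! 2 = Ys ! i" using pL 2 by simp
    then have "T Pd (real sn) a b (dg (ps ! i ! 1)) (dg (Xs ! i) + dg (Ys ! i))" using t p0 by simp
    moreover have "L - 2 = 1" using 2 by simp
    ultimately show ?thesis unfolding pcl_def L_def[symmetric] using 2
      by (rule_tac x=2 in exI) auto
  next
    case 3
    have t1: "T Pd (real sn) a b (dg (ps ! i ! 1)) (dg (ps ! i ! 0) + dg (ps ! i ! 2))"
      using int_T(2)[OF i, of 1] 3 unfolding L_def by (simp add: numeral_2_eq_2)
    have d1: "D Pd (real sn) (dg (ps ! i ! 2))"
      using int_T(1)[OF i, of 2] 3 unfolding L_def by simp
    have t2: "T Pd (real sn) a b (dg (ps ! i ! (L - 2))) (dg (ps ! i ! (L - 2 - 1)) + dg (ps ! i ! Suc (L - 2)))"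
      using int_T(2)[OF i, of "L - 2"] 3 unfolding L_def by simp
    have e1: "Suc (L - 2) = L - 1" "L - 2 - 1 = L - 3" using 3 by auto
    have t2': "T Pd (real sn) a b (dg (ps ! i ! (L - 2))) (dg (Ys ! i) + dg (ps ! i ! (L - 3)))"
      using t2 unfolding e1 pL by (simp add: add.commute)
    have d2: "D Pd (real sn) (dg (ps ! i ! (L - 3)))"
      using int_T(1)[OF i, of "L - 3"] 3 unfolding L_def by simp
    show ?thesis unfolding pcl_def L_def[symmetric] using 3 t1 d1 t2' d2 p0
      by (rule_tac x=3 in exI, rule_tac x="dg (ps ! i ! 2)" in exI, rule_tac x="dg (ps ! i ! (L - 3))" in exI) auto
  qed
qed


theorem t5s_false: False
proof -
  define L where "L i = length (ps ! i)" for i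
  obtain k0 w0 z0 where q0: "pcl Pd (real sn) a b (dg A) (dg C) k0 (dg (ps ! 0 ! 1)) (dg (ps ! 0 ! (L 0 - 2))) w0 z0"
    and e0: "k0 = 1 \<longleftrightarrow> L 0 = 2" using path_pcl[of 0] unfolding L_def by (auto simp: Xs_def Ys_def)
  obtain k1 w1 z1 where q1: "pcl Pd (real sn) a b (dg A) (dg B) k1 (dg (ps ! 1 ! 1)) (dg (ps ! 1 ! (L 1 - 2))) w1 z1"
    and e1: "k1 = 1 \<longleftrightarrow> L 1 = 2" using path_pcl[of 1] unfolding L_def by (auto simp: Xs_def Ys_def)
  obtain k2 w2 z2 where q2: "pcl Pd (real sn) a b (dg A) (dg B) k2 (dg (ps ! 2 ! 1)) (dg (ps ! 2 ! (L 2 - 2))) w2 z2"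
    and e2: "k2 = 1 \<longleftrightarrow> L 2 = 2" using path_pcl[of 2] unfolding L_def by (auto simp: Xs_def Ys_def)
  obtain k3 w3 z3 where q3: "pcl Pd (real sn) a b (dg B) (dg C) k3 (dg (ps ! 3 ! 1)) (dg (ps ! 3 ! (L 3 - 2))) w3 z3"
    and e3: "k3 = 1 \<longleftrightarrow> L 3 = 2" using path_pcl[of 3] unfolding L_def by (auto simp: Xs_def Ys_def)
  obtain k4 w4 z4 where q4: "pcl Pd (real sn) a b (dg B) (dg C) k4 (dg (ps ! 4 ! 1)) (dg (ps ! 4 ! (L 4 - 2))) w4 z4"
    and e4: "k4 = 1 \<longleftrightarrow> L 4 = 2" using path_pcl[of 4] unfolding L_def by (auto simp: Xs_def Ys_def)
  have k12: "\<not> (k1 = 1 \<and> k2 = 1)" using not_both2[of 1 2] e1 e2 unfolding L_def by (simp add: Xs_def Ys_def)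
  have k34: "\<not> (k3 = 1 \<and> k4 = 1)" using not_both2[of 3 4] e3 e4 unfolding L_def by (simp add: Xs_def Ys_def)
  have cA: "card (nb0 A) = 3" and sA: "(\<Sum>u\<in>nb0 A. dg u) = dg (ps ! 0 ! 1) + dg (ps ! 1 ! 1) + dg (ps ! 2 ! 1)"
    using nbA by simp_all
  have tA: "TE Pd (real sn) a b 3 (dg A) (dg (ps ! 0 ! 1) + dg (ps ! 1 ! 1) + dg (ps ! 2 ! 1))"
    using TE_intro[OF _ eqv[OF ABC_V0(1)]] dgv[OF ABC_V0(1)] cA sA by simp
  have cB: "card (nb0 B) = 4" and sB: "(\<Sum>u\<in>nb0 B. dg u) = dg (ps ! 1 ! (L 1 - 2)) + dg (ps ! 2 ! (L 2 - 2)) + dg (ps ! 3 ! 1) + dg (ps ! 4 ! 1)"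
    using nbB unfolding L_def by simp_all
  have tB: "TE Pd (real sn) a b 4 (dg B) (dg (ps ! 1 ! (L 1 - 2)) + dg (ps ! 2 ! (L 2 - 2)) + dg (ps ! 3 ! 1) + dg (ps ! 4 ! 1))"
    using TE_intro[OF _ eqv[OF ABC_V0(2)]] dgv[OF ABC_V0(2)] cB sB by simp
  have cC: "card (nb0 C) = 3" and sC: "(\<Sum>u\<in>nb0 C. dg u) = dg (ps ! 0 ! (L 0 - 2)) + dg (ps ! 3 ! (L 3 - 2)) + dg (ps ! 4 ! (L 4 - 2))"
    using nbC unfolding L_def by simp_all
  have tC: "TE Pd (real sn) a b 3 (dg C) (dg (ps ! 0 ! (L 0 - 2)) + dg (ps ! 3 ! (L 3 - 2)) + dg (ps ! 4 ! (L 4 - 2)))"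
    using TE_intro[OF _ eqv[OF ABC_V0(3)]] dgv[OF ABC_V0(3)] cC sC by simp
  show False by (rule arith_final[OF Pb Ps tA tB tC q0 q1 q2 q3 q4 k12 k34])
qed

end

context gr
begin

lemma deg_card: "v \<in> V \<Longrightarrow> Defs.degree E v = card {u \<in> V. adj E u v}"
proof -
  assume vV: "v \<in> V"
  let ?N = "{u \<in> V. adj E u v}"
  have inj: "inj_on (\<lambda>u. {u, v}) ?N"
  proof (rule inj_onI)
    fix x y assume x: "x \<in> ?N" and y: "y \<in> ?N" and e: "{x, v} = {y, v}"
    have "x \<noteq> v" using x adj_in by auto
    then show "x = y" using e by (auto simp: doubleton_eq_iff)
  qed
  have img: "(\<lambda>u. {u, v}) ` ?N = {e \<in> E. v \<in> e}"
  proof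
    show "(\<lambda>u. {u, v}) ` ?N \<subseteq> {e \<in> E. v \<in> e}" unfolding adj_def by auto
    show "{e \<in> E. v \<in> e} \<subseteq> (\<lambda>u. {u, v}) ` ?N"
    proof
      fix e assume "e \<in> {e \<in> E. v \<in> e}"
      then have eE: "e \<in> E" and ve: "v \<in> e" by auto
      then obtain x y where xy: "e = {x, y}" "x \<noteq> y" "x \<in> V" "y \<in> V"
        using sg unfolding simple_graph_def by blast
      show "e \<in> (\<lambda>u. {u, v}) ` ?N"
      proof (cases "v = x")
        case True
        then have "e = {y, v}" using xy by auto
        moreover have "adj E y v" using eE \<open>e = {y, v}\<close> unfolding adj_def by simp
        ultimately show ?thesis using xy by auto
      next
        case False
        then have "v = y" using ve xy by auto
        then have "e = {x, v}" using xy by auto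
        moreover have "adj E x v" using eE \<open>e = {x, v}\<close> unfolding adj_def by simp
        ultimately show ?thesis using xy by auto
      qed
    qed
  qed
  show ?thesis unfolding Defs.degree_def img[symmetric] using card_image[OF inj] by simp
qed

end

theorem lemma3p6:
  fixes V :: "'a set" and E :: "'a set set"
  assumes "simple_graph V E"
    and "connected_graph V E"
    and "card E = card V + 2"
    and "card {\<mu>. main_eigenvalue V E \<mu>} = 2"
  shows "\<not> in_T5 (del_pendant_V V E) (del_pendant_E V E)"
proof
  assume T: "in_T5 (del_pendant_V V E) (del_pendant_E V E)"
  interpret gr V E by unfold_locales (rule assms(1))
  obtain a b where ab: "\<forall>v\<in>V. Aop (Aop jv) v = a * Aop jv v + b" using two_main[OF assms(4)] by blast
  define N where "N v = {u \<in> V. adj E u v}" for v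
  define dg where "dg v = real (card (N v))" for v
  have finN: "finite (N v)" for v using finV unfolding N_def by auto
  have NV: "N v \<subseteq> V" for v unfolding N_def by auto
  have lin: "(\<Sum>u\<in>N v. dg u) = a * dg v + b" if vV: "v \<in> V" for v
  proof -
    have "Aop (Aop jv) v = (\<Sum>u\<in>N v. Aop jv u)" unfolding Aop_def[of "Aop jv"] adj_mult_def N_def ..
    also have "\<dots> = (\<Sum>u\<in>N v. dg u)" by (rule sum.cong) (auto simp: Aop_jv N_def dg_def)
    finally show ?thesis using ab vV Aop_jv[OF vV] unfolding dg_def N_def by simp
  qed
  define P where "P = pendant_vertices V E"
  define V0 where "V0 = del_pendant_V V E"
  have V0P: "V0 = V - P" unfolding V0_def P_def del_pendant_V_def ..
  have PV: "P \<subseteq> V" unfolding P_def pendant_vertices_def by auto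
  have Pc: "card (N w) = 1" if "w \<in> P" for w
    using that deg_card unfolding P_def pendant_vertices_def N_def by auto
  from T[unfolded in_T5_def Let_def] obtain A B C p1 p2 p3 p4 p5 where
    h1: "distinct [A, B, C]" and h2: "is_path_between p1 A C" and h3: "is_path_between p2 A B"
    and h4: "is_path_between p3 A B" and h5: "is_path_between p4 B C" and h6: "is_path_between p5 B C"
    and h7: "\<forall>i<5. interior ([p1, p2, p3, p4, p5] ! i) \<inter> {A, B, C} = {}"
    and h8: "\<forall>i<5. \<forall>j<5. i \<noteq> j \<longrightarrow> interior ([p1, p2, p3, p4, p5] ! i) \<inter> set ([p1, p2, p3, p4, p5] ! j) = {}"
    and h9: "\<forall>i<5. \<forall>j<5. i \<noteq> j \<longrightarrow> path_edges ([p1, p2, p3, p4, p5] ! i) \<inter> path_edges ([p1, p2, p3, p4, p5] ! j) = {}"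
    and h10: "del_pendant_V V E = (\<Union>i<5. set ([p1, p2, p3, p4, p5] ! i))"
    and h11: "del_pendant_E V E = (\<Union>i<5. path_edges ([p1, p2, p3, p4, p5] ! i))"
    by (elim exE conjE) (rule that; assumption)
  have h10': "V0 = (\<Union>i<5. set ([p1, p2, p3, p4, p5] ! i))" using h10 unfolding V0_def .
  interpret t: t5 V0 "del_pendant_E V E" A B C p1 p2 p3 p4 p5
    by unfold_locales (fact h1 h2 h3 h4 h5 h6 h7 h8 h9 h10' h11)+
  have nb0: "t.nb0 v = N v \<inter> V0" if "v \<in> V0" for v
  proof -
    have "{u, v} \<in> del_pendant_E V E \<longleftrightarrow> u \<in> N v \<and> u \<in> V0" for u
      using that adj_in[of u v] unfolding del_pendant_E_def V0_def[symmetric] N_def adj_def by auto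
    then show ?thesis unfolding t.nb0_def by auto
  qed
  have split: "N v = t.nb0 v \<union> (N v \<inter> P)" "t.nb0 v \<inter> (N v \<inter> P) = {}" if "v \<in> V0" for v
    using nb0[OF that] NV[of v] V0P by auto
  define pc where "pc v = card (N v \<inter> P)" for v
  have fins: "finite (t.nb0 v)" "finite (N v \<inter> P)" if "v \<in> V0" for v
    using split(1)[OF that] finN[of v] by (metis finite_Un, simp)
  have cN: "card (N v) = card (t.nb0 v) + pc v" if "v \<in> V0" for v
  proof -
    have "card (t.nb0 v \<union> (N v \<inter> P)) = card (t.nb0 v) + card (N v \<inter> P)"
      by (rule card_Un_disjoint[OF fins[OF that] split(2)[OF that]])
    then show ?thesis unfolding pc_def using split(1)[OF that] by simp
  qed
  have sN: "(\<Sum>u\<in>N v. dg u) = (\<Sum>u\<in>t.nb0 v. dg u) + real (pc v)" if "v \<in> V0" for v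
  proof -
    have f1: "finite (t.nb0 v)" using split(1)[OF that] finN[of v] by (metis finite_Un)
    have f2: "finite (N v \<inter> P)" using finN[of v] by simp
    have "(\<Sum>u\<in>N v. dg u) = (\<Sum>u\<in>t.nb0 v. dg u) + (\<Sum>u\<in>N v \<inter> P. dg u)"
      using sum.union_disjoint[OF f1 f2 split(2)[OF that]] split(1)[OF that] by simp
    also have "(\<Sum>u\<in>N v \<inter> P. dg u) = (\<Sum>u\<in>N v \<inter> P. 1)" by (rule sum.cong) (auto simp: dg_def Pc)
    finally show ?thesis unfolding pc_def by simp
  qed
  have V0V: "V0 \<subseteq> V" using V0P by auto
  have eqv: "(\<Sum>u\<in>t.nb0 v. dg u) = (a-1) * dg v + b + real (card (t.nb0 v))" if "v \<in> V0" for v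
  proof -
    have "(\<Sum>u\<in>t.nb0 v. dg u) + real (pc v) = a * dg v + b" using lin[of v] sN[OF that] that V0V by auto
    moreover have "dg v = real (card (t.nb0 v)) + real (pc v)" unfolding dg_def using cN[OF that] by simp
    ultimately show ?thesis by (simp add: algebra_simps)
  qed
  have pend_nb: "dg v = a + b" if "v \<in> V0" "N v \<inter> P \<noteq> {}" for v
  proof -
    from that obtain w where w: "w \<in> N v" "w \<in> P" by auto
    have vV: "v \<in> V" using that V0V by auto
    have wV: "w \<in> V" using w PV by auto
    have "v \<in> N w" using w(1) vV unfolding N_def by (simp add: adj_sym)
    moreover have "card (N w) = 1" using Pc[OF w(2)] .
    ultimately have Nw: "N w = {v}" by (metis card_1_singletonE singletonD)
    have "(\<Sum>u\<in>N w. dg u) = a * dg w + b" by (rule lin[OF wV])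
    then show ?thesis using Nw Pc[OF w(2)] unfolding dg_def by simp
  qed
  define Pd where "Pd \<longleftrightarrow> (\<exists>v\<in>V0. N v \<inter> P \<noteq> {})"
  define sn where "sn = (if Pd then card (N (SOME v. v \<in> V0 \<and> N v \<inter> P \<noteq> {})) else 0)"
  have snP: "Pd \<Longrightarrow> real sn = a + b \<and> sn \<ge> 3"
  proof -
    assume Pd
    define v0 where "v0 = (SOME v. v \<in> V0 \<and> N v \<inter> P \<noteq> {})"
    have v0: "v0 \<in> V0" "N v0 \<inter> P \<noteq> {}" using someI_ex[of "\<lambda>v. v \<in> V0 \<and> N v \<inter> P \<noteq> {}"] \<open>Pd\<close>
      unfolding Pd_def v0_def by auto
    have "sn = card (N v0)" unfolding sn_def v0_def using \<open>Pd\<close> by simp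
    moreover have "dg v0 = a + b" by (rule pend_nb[OF v0])
    moreover have "pc v0 \<ge> 1" using v0(2) finN[of v0] unfolding pc_def
      by (metis One_nat_def Suc_leI card_gt_0_iff finite_Int)
    moreover have "card (t.nb0 v0) \<ge> 2" using t.h_ge2 v0(1) by simp
    ultimately show "real sn = a + b \<and> sn \<ge> 3" using cN[OF v0(1)] unfolding dg_def by simp
  qed
  have dgv: "dg v = real (card (t.nb0 v)) \<or> (Pd \<and> dg v = real sn \<and> real sn \<ge> real (card (t.nb0 v)) + 1)"
    if v: "v \<in> V0" for v
  proof (cases "N v \<inter> P = {}")
    case True
    then have "pc v = 0" unfolding pc_def by simp
    then show ?thesis using cN[OF v] unfolding dg_def by simp
  next
    case False
    then have Pd unfolding Pd_def using v by blast
    have "pc v \<ge> 1" using False finN[of v] unfolding pc_def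
      by (metis One_nat_def Suc_leI card_gt_0_iff finite_Int)
    moreover have "dg v = real sn" using pend_nb[OF v False] snP[OF \<open>Pd\<close>] by simp
    ultimately show ?thesis using cN[OF v] \<open>Pd\<close> unfolding dg_def by simp
  qed
  interpret ts: t5s V0 "del_pendant_E V E" A B C p1 p2 p3 p4 p5 dg a b sn Pd
  proof unfold_locales
    show "\<And>v. v \<in> V0 \<Longrightarrow> (\<Sum>u\<in>t.nb0 v. dg u) = (a - 1) * dg v + b + real (card (t.nb0 v))" by (rule eqv)
    show "\<And>v. v \<in> V0 \<Longrightarrow> dg v = real (card (t.nb0 v)) \<or> Pd \<and> dg v = real sn \<and> real (card (t.nb0 v)) + 1 \<le> real sn"
      using dgv by auto
    show "Pd \<Longrightarrow> b = real sn - a" using snP by simp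
    show "Pd \<Longrightarrow> 3 \<le> sn" using snP by simp
  qed
  show False by (rule ts.t5s_false)
qed

end
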